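(* Let $\phi(\mathbf{x})=u\bullet v$ and $\psi(\mathbf{x})=a\bullet b$ be two two-dimensional projective flows with smooth vector fields $\varpi\bullet\varrho$ and $\alpha\bullet\beta$, respectively. Then $\phi$ and $\psi$ commute if and only if $\phi\circ\psi$ is again a projective flow, and this happens exactly when $$\varpi_{x}\alpha+\varpi_{y}\beta=\varpi\alpha_{x}+\varrho\alpha_{y},\qquad \varrho_{x}\alpha+\varrho_{y}\beta=\varpi\beta_{x}+\varrho\beta_{y}.$$
   Context: Notation: $F\bullet G$ denotes the pair $(F,G)$, $\mathbf{x}=x\bullet y$; for a map $\phi$ and $z\in\mathbb{R}$, $\phi^{z}(\mathbf{x})=z^{-1}\phi(\mathbf{x}z)$. A (two-dimensional) projective flow is a map $\phi$ satisfying $\phi^{z+w}=\phi^{z}\circ\phi^{w}$ for real $z,w$ (the projective translation equation $\frac{1}{z+w}\phi(\mathbf{x}(z+w))=\frac{1}{w}\phi(\phi(\mathbf{x}z)\frac{w}{z})$) and $\lim_{z\to0}\phi^{z}(\mathbf{x})=\mathbf{x}$. Its vector field is $\varpi\bullet\varrho=\frac{d}{dz}\frac{\phi(xz,yz)}{z}\big|_{z=0}$, a pair of $2$-homogeneous functions. Two flows $\phi,\psi$ commute if $\phi^{z}\circ\psi^{w}=\psi^{w}\circ\phi^{z}$ for all real $z,w$. Subscripts denote partial derivatives. *)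

theory Defs
  imports "HOL-Analysis.Analysis"
begin

type_synonym pt = "real \<times> real"

text \<open>The map phi^z(x) = z^{-1} phi(x z); at z = 0 it is the identity
  (the value forced by the boundary condition lim_{z->0} phi^z(x) = x).\<close>
definition piter :: "(pt \<Rightarrow> pt) \<Rightarrow> real \<Rightarrow> pt \<Rightarrow> pt" where
  "piter \<phi> z x = (if z = 0 then x else (1 / z) *\<^sub>R \<phi> (z *\<^sub>R x))"

definition proj_flow :: "(pt \<Rightarrow> pt) \<Rightarrow> bool" where
  "proj_flow \<phi> \<longleftrightarrow>
     (\<forall>z w. piter \<phi> (z + w) = piter \<phi> z \<circ> piter \<phi> w) \<and>
     (\<forall>x. ((\<lambda>z. (1 / z) *\<^sub>R \<phi> (z *\<^sub>R x)) \<longlongrightarrow> x) (at 0))"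

definition has_vfield :: "(pt \<Rightarrow> pt) \<Rightarrow> (pt \<Rightarrow> real) \<Rightarrow> (pt \<Rightarrow> real) \<Rightarrow> bool" where
  "has_vfield \<phi> \<omega> \<rho> \<longleftrightarrow>
     (\<forall>x. ((\<lambda>z. piter \<phi> z x) has_vector_derivative (\<omega> x, \<rho> x)) (at 0))"

definition commute :: "(pt \<Rightarrow> pt) \<Rightarrow> (pt \<Rightarrow> pt) \<Rightarrow> bool" where
  "commute \<phi> \<psi> \<longleftrightarrow> (\<forall>z w. piter \<phi> z \<circ> piter \<psi> w = piter \<psi> w \<circ> piter \<phi> z)"

definition pdx :: "(pt \<Rightarrow> real) \<Rightarrow> pt \<Rightarrow> real" where
  "pdx f p = deriv (\<lambda>t. f (t, snd p)) (fst p)"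

definition pdy :: "(pt \<Rightarrow> real) \<Rightarrow> pt \<Rightarrow> real" where
  "pdy f p = deriv (\<lambda>t. f (fst p, t)) (snd p)"

text \<open>Smooth (C-infinity) functions on the plane: differentiable everywhere, with
  smooth partial derivatives.\<close>
coinductive smooth2 :: "(pt \<Rightarrow> real) \<Rightarrow> bool" where
  "(\<forall>p. f differentiable (at p)) \<Longrightarrow> smooth2 (pdx f) \<Longrightarrow> smooth2 (pdy f) \<Longrightarrow> smooth2 f"

end

theory Submission
  imports Defs
begin


lemma vbound:
  fixes f :: "real \<Rightarrow> 'a::real_normed_vector"
  assumes "a \<le> b" "\<And>x. x \<in> {a..b} \<Longrightarrow> (f has_vector_derivative f' x) (at x within {a..b})"
    "\<And>x. x\<in>{a..b} \<Longrightarrow> norm (f' x) \<le> B"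
  shows "norm (f b - f a) \<le> B * (b - a)"
proof -
  have "norm (f b - f a) \<le> B * norm (b - a)"
  proof (rule differentiable_bound[where f'="\<lambda>x h. h *\<^sub>R f' x"])
    show "(f has_derivative (\<lambda>h. h *\<^sub>R f' x)) (at x within {a..b})" if "x \<in> {a..b}" for x
      using assms(2)[OF that] by (simp add: has_vector_derivative_def)
    show "onorm (\<lambda>h. h *\<^sub>R f' x) \<le> B" if "x \<in> {a..b}" for x
    proof (rule onorm_le)
      fix h :: real show "norm (h *\<^sub>R f' x) \<le> B * norm h"
        using mult_left_mono[OF assms(3)[OF that] abs_ge_zero[of h]] by (simp add: mult.commute)
    qed
  qed (use assms in auto)
  then show ?thesis using assms(1) by simp
qed

lemma continuation:
  fixes Q :: "real \<Rightarrow> bool"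
  assumes step: "\<And>S. S \<ge> 0 \<Longrightarrow> (\<forall>\<sigma>. 0 \<le> \<sigma> \<and> \<sigma> < S \<longrightarrow> Q \<sigma>) \<Longrightarrow> \<exists>e>0. \<forall>\<sigma>. 0 \<le> \<sigma> \<and> \<sigma> < S + e \<longrightarrow> Q \<sigma>"
    and "\<sigma>0 \<ge> 0"
  shows "Q \<sigma>0"
proof (rule ccontr)
  assume nq: "\<not> Q \<sigma>0"
  define A where "A = {\<sigma>. 0 \<le> \<sigma> \<and> \<not> Q \<sigma>}"
  have ne: "A \<noteq> {}" using nq assms(2) A_def by auto
  have bdd: "bdd_below A" unfolding A_def by (rule bdd_belowI[of _ 0]) auto
  define S where "S = Inf A"
  have S0: "S \<ge> 0" unfolding S_def by (rule cInf_greatest[OF ne]) (auto simp: A_def)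
  have "\<forall>\<sigma>. 0 \<le> \<sigma> \<and> \<sigma> < S \<longrightarrow> Q \<sigma>"
  proof (intro allI impI)
    fix \<sigma> assume h: "0 \<le> \<sigma> \<and> \<sigma> < S"
    show "Q \<sigma>"
    proof (rule ccontr)
      assume "\<not> Q \<sigma>" then have "\<sigma> \<in> A" using h A_def by auto
      then have "S \<le> \<sigma>" unfolding S_def using bdd by (rule cInf_lower)
      then show False using h by simp
    qed
  qed
  from step[OF S0 this] obtain e where e: "e > 0" "\<forall>\<sigma>. 0 \<le> \<sigma> \<and> \<sigma> < S + e \<longrightarrow> Q \<sigma>" by blast
  have "Inf A < S + e" using e S_def by simp
  then obtain a where "a \<in> A" "a < S + e" using cInf_less_iff[OF ne bdd] by blast
  then show False using e A_def by auto
qed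

lemma gronwall:
  fixes g1 g2 :: "real \<Rightarrow> 'a::real_inner"
  assumes "T \<ge> 0" "L \<ge> 0"
    and d1: "\<And>\<sigma>. \<sigma> \<in> {0..T} \<Longrightarrow> (g1 has_vector_derivative f (g1 \<sigma>)) (at \<sigma>)"
    and d2: "\<And>\<sigma>. \<sigma> \<in> {0..T} \<Longrightarrow> (g2 has_vector_derivative f (g2 \<sigma>)) (at \<sigma>)"
    and lip: "\<And>\<sigma>. \<sigma> \<in> {0..T} \<Longrightarrow> norm (f (g1 \<sigma>) - f (g2 \<sigma>)) \<le> L * norm (g1 \<sigma> - g2 \<sigma>)"
    and s: "\<sigma> \<in> {0..T}"
  shows "norm (g1 \<sigma> - g2 \<sigma>) \<le> norm (g1 0 - g2 0) * exp (L * \<sigma>)"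
proof -
  define d where "d = (\<lambda>t. g1 t - g2 t)"
  define h where "h = (\<lambda>t. (d t \<bullet> d t) * exp (- (2 * L) * t))"
  have hd: "\<exists>y. DERIV h t :> y \<and> y \<le> 0" if t: "0 \<le> t" "t \<le> \<sigma>" for t
  proof -
    have tT: "t \<in> {0..T}" using t s by auto
    let ?d' = "f (g1 t) - f (g2 t)"
    have dd: "(d has_vector_derivative ?d') (at t)"
      unfolding d_def using d1[OF tT] d2[OF tT] by (rule has_vector_derivative_diff)
    have di: "((\<lambda>t. d t \<bullet> d t) has_real_derivative 2 * (d t \<bullet> ?d')) (at t)"
      apply (simp add: has_field_derivative_def)
      apply (rule has_derivative_eq_rhs)
       apply (rule has_derivative_inner[OF dd[unfolded has_vector_derivative_def] dd[unfolded has_vector_derivative_def]])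
      apply (auto simp: fun_eq_iff inner_commute algebra_simps)
      done
    have "DERIV h t :> (2 * (d t \<bullet> ?d')) * exp (- (2 * L) * t) + (d t \<bullet> d t) * (exp (- (2 * L) * t) * (- (2 * L)))"
      unfolding h_def
      by (rule derivative_eq_intros di refl | simp)+
    moreover have "(2 * (d t \<bullet> ?d')) * exp (- (2 * L) * t) + (d t \<bullet> d t) * (exp (- (2 * L) * t) * (- (2 * L))) \<le> 0"
    proof -
      have "d t \<bullet> ?d' \<le> norm (d t) * norm ?d'" by (rule norm_cauchy_schwarz)
      also have "\<dots> \<le> norm (d t) * (L * norm (d t))"
        using lip[OF tT] unfolding d_def by (simp add: mult_left_mono)
      also have "\<dots> = L * (d t \<bullet> d t)" by (simp add: power2_norm_eq_inner[symmetric] power2_eq_square)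
      finally have "2 * (d t \<bullet> ?d') - 2 * L * (d t \<bullet> d t) \<le> 0" by simp
      then have "(2 * (d t \<bullet> ?d') - 2 * L * (d t \<bullet> d t)) * exp (- (2 * L) * t) \<le> 0"
        by (simp add: mult_nonpos_nonneg)
      then show ?thesis by (simp add: algebra_simps)
    qed
    ultimately show ?thesis by blast
  qed
  have "h \<sigma> \<le> h 0" using DERIV_nonpos_imp_nonincreasing[of 0 \<sigma> h] hd s by auto
  then have "(norm (d \<sigma>))\<^sup>2 * exp (- (2 * L) * \<sigma>) \<le> (norm (d 0))\<^sup>2"
    by (simp add: h_def power2_norm_eq_inner)
  then have "(norm (d \<sigma>))\<^sup>2 \<le> (norm (d 0))\<^sup>2 * exp (2 * L * \<sigma>)"
    by (simp add: exp_minus field_simps)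
  also have "\<dots> = (norm (d 0) * exp (L * \<sigma>))\<^sup>2"
    by (simp add: power_mult_distrib power2_eq_square exp_add[symmetric])
  finally have "norm (d \<sigma>) \<le> norm (d 0) * exp (L * \<sigma>)"
    by (rule power2_le_imp_le) simp
  then show ?thesis by (simp add: d_def)
qed



definition isflow :: "(real \<Rightarrow> pt \<Rightarrow> pt) \<Rightarrow> (pt \<Rightarrow> pt) \<Rightarrow> bool" where
  "isflow Fl f \<longleftrightarrow> (\<forall>z w y. Fl (z + w) y = Fl z (Fl w y)) \<and> (\<forall>y. Fl 0 y = y) \<and>
     (\<forall>\<sigma> y. ((\<lambda>u. Fl u y) has_vector_derivative f (Fl \<sigma> y)) (at \<sigma>))"

definition C1 :: "(pt \<Rightarrow> pt) \<Rightarrow> (pt \<Rightarrow> pt \<Rightarrow> pt) \<Rightarrow> bool" where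
  "C1 f Df \<longleftrightarrow> (\<forall>p. (f has_derivative Df p) (at p)) \<and>
     (\<forall>c \<epsilon>. \<epsilon> > 0 \<longrightarrow> (\<exists>r>0. \<forall>x\<in>ball c r. \<forall>h. norm (Df x h - Df c h) \<le> \<epsilon> * norm h))"

lemma isflow_group: "isflow Fl f \<Longrightarrow> Fl (z + w) y = Fl z (Fl w y)"
  unfolding isflow_def by blast
lemma isflow_0[simp]: "isflow Fl f \<Longrightarrow> Fl 0 y = y"
  unfolding isflow_def by blast
lemma isflow_deriv: "isflow Fl f \<Longrightarrow> ((\<lambda>u. Fl u y) has_vector_derivative f (Fl \<sigma> y)) (at \<sigma>)"
  unfolding isflow_def by blast
lemma isflow_cont: "isflow Fl f \<Longrightarrow> continuous (at \<sigma>) (\<lambda>u. Fl u y)"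
  using isflow_deriv has_vector_derivative_continuous by blast
lemma isflow_inv: "isflow Fl f \<Longrightarrow> Fl (- s) (Fl s y) = y"
  using isflow_group[of Fl f "-s" s y] by simp
lemma isflow_inv2: "isflow Fl f \<Longrightarrow> Fl s (Fl (- s) y) = y"
  using isflow_group[of Fl f s "-s" y] by simp

lemma isflow_rev: assumes "isflow Fl f" shows "isflow (\<lambda>u. Fl (- u)) (\<lambda>p. - f p)"
proof -
  have D: "((\<lambda>u. Fl (- u) y) has_vector_derivative - f (Fl (- \<sigma>) y)) (at \<sigma>)" for \<sigma> y
  proof -
    have "((\<lambda>u. - u) has_vector_derivative -1) (at \<sigma>)"
      by (auto intro!: derivative_eq_intros simp: has_vector_derivative_def)
    from vector_diff_chain_at[OF this, of "\<lambda>u. Fl u y"] isflow_deriv[OF assms]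
    show ?thesis by (simp add: o_def)
  qed
  have G: "Fl (- (z + w)) y = Fl (- z) (Fl (- w) y)" for z w y
    using isflow_group[OF assms, of "-z" "-w" y] by simp
  show ?thesis unfolding isflow_def
  proof (intro conjI allI)
    fix z w y show "Fl (- (z + w)) y = Fl (- z) (Fl (- w) y)" by (rule G)
  next
    fix y show "Fl (- 0) y = y" using isflow_0[OF assms] by simp
  next
    fix \<sigma> y show "((\<lambda>u. Fl (- u) y) has_vector_derivative - f (Fl (- \<sigma>) y)) (at \<sigma>)" by (rule D)
  qed
qed

lemma C1_deriv: "C1 f Df \<Longrightarrow> (f has_derivative Df p) (at p)"
  unfolding C1_def by blast
lemma C1_cont: "C1 f Df \<Longrightarrow> continuous (at p) f"
  using C1_deriv has_derivative_continuous by blast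
lemma C1_contD: "C1 f Df \<Longrightarrow> \<epsilon> > 0 \<Longrightarrow> \<exists>r>0. \<forall>x\<in>ball c r. \<forall>h. norm (Df x h - Df c h) \<le> \<epsilon> * norm h"
  unfolding C1_def by blast
lemma C1_lin: "C1 f Df \<Longrightarrow> linear (Df p)"
  using C1_deriv has_derivative_linear by blast
lemma C1_bnd: assumes "C1 f Df" shows "\<exists>K>0. \<forall>h. norm (Df p h) \<le> K * norm h"
proof -
  obtain K where K: "K > 0" "\<And>x. norm (Df p x) \<le> norm x * K"
    using bounded_linear.pos_bounded[OF has_derivative_bounded_linear[OF C1_deriv[OF assms]]] by blast
  show ?thesis by (rule exI[of _ K]) (use K in \<open>simp add: mult.commute\<close>)
qed

lemma C1_rev: assumes "C1 f Df" shows "C1 (\<lambda>p. - f p) (\<lambda>p h. - Df p h)"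
proof -
  have "((\<lambda>p. - f p) has_derivative (\<lambda>h. - Df p h)) (at p)" for p
    using C1_deriv[OF assms] by (rule has_derivative_minus)
  moreover have "\<exists>r>0. \<forall>x\<in>ball c r. \<forall>h. norm (- Df x h - - Df c h) \<le> \<epsilon> * norm h" if eps: "\<epsilon> > 0" for c \<epsilon>
  proof -
    obtain r where r: "r > 0" "\<forall>x\<in>ball c r. \<forall>h. norm (Df x h - Df c h) \<le> \<epsilon> * norm h"
      using C1_contD[OF assms eps, of c] by blast
    have "\<forall>x\<in>ball c r. \<forall>h. norm (- Df x h - - Df c h) \<le> \<epsilon> * norm h"
    proof (intro ballI allI)
      fix x h assume "x \<in> ball c r"
      then have "norm (Df x h - Df c h) \<le> \<epsilon> * norm h" using r(2) by blast
      moreover have "norm (- Df x h - - Df c h) = norm (Df x h - Df c h)"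
        by (simp add: norm_minus_commute)
      ultimately show "norm (- Df x h - - Df c h) \<le> \<epsilon> * norm h" by simp
    qed
    then show ?thesis using r(1) by blast
  qed
  ultimately show ?thesis unfolding C1_def by (intro conjI allI impI) blast+
qed

lemma C1_local:
  assumes "C1 f Df"
  shows "\<exists>R>0. \<exists>M>0. \<exists>L>0. (\<forall>x\<in>cball c R. norm (f x) \<le> M) \<and>
     (\<forall>a\<in>cball c R. \<forall>b\<in>cball c R. norm (f a - f b) \<le> L * norm (a - b))"
proof -
  obtain K where K: "K > 0" "\<forall>h. norm (Df c h) \<le> K * norm h" using C1_bnd[OF assms] by blast
  obtain r1 where r1: "r1 > 0" "\<forall>x\<in>ball c r1. \<forall>h. norm (Df x h - Df c h) \<le> 1 * norm h"
    using C1_contD[OF assms, of 1 c] by auto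
  obtain r2 where r2: "r2 > 0" "\<forall>x. dist x c < r2 \<longrightarrow> dist (f x) (f c) < 1"
    using C1_cont[OF assms, of c] unfolding continuous_at_eps_delta by (meson zero_less_one)
  define R where "R = min r1 r2 / 2"
  have R: "R > 0" "R < r1" "R < r2" using r1 r2 by (auto simp: R_def)
  have A: "\<forall>x\<in>cball c R. norm (f x) \<le> norm (f c) + 1"
  proof
    fix x assume "x \<in> cball c R"
    then have "dist x c < r2" using R by (simp add: dist_commute)
    then have "dist (f x) (f c) < 1" using r2 by blast
    then show "norm (f x) \<le> norm (f c) + 1" using norm_triangle_sub[of "f x" "f c"] by (simp add: dist_norm)
  qed
  have B: "\<forall>a\<in>cball c R. \<forall>b\<in>cball c R. norm (f a - f b) \<le> (K + 1) * norm (a - b)"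
  proof (intro ballI)
    fix a b assume ab: "a \<in> cball c R" "b \<in> cball c R"
    show "norm (f a - f b) \<le> (K + 1) * norm (a - b)"
    proof (rule differentiable_bound[where S="cball c R" and f'=Df])
      show "(f has_derivative Df x) (at x within cball c R)" for x
        using C1_deriv[OF assms] has_derivative_at_withinI by blast
      show "onorm (Df x) \<le> K + 1" if "x \<in> cball c R" for x
      proof (rule onorm_le)
        fix h
        have "x \<in> ball c r1" using that R by auto
        then have "norm (Df x h - Df c h) \<le> 1 * norm h" using r1(2) by blast
        then have "norm (Df x h - Df c h) \<le> norm h" by simp
        then have "norm (Df x h) \<le> norm (Df c h) + norm h" using norm_triangle_sub[of "Df x h" "Df c h"] by linarith
        also have "\<dots> \<le> K * norm h + norm h" using spec[OF K(2), of h] by linarith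
        finally show "norm (Df x h) \<le> (K + 1) * norm h" by (simp add: algebra_simps)
      qed
    qed (use ab in auto)
  qed
  have Mp: "norm (f c) + 1 > 0" by (simp add: add_nonneg_pos)
  have Lp: "K + 1 > 0" using K(1) by simp
  show ?thesis
    apply (rule exI[of _ R]) apply (rule conjI[OF R(1)])
    apply (rule exI[of _ "norm (f c) + 1"]) apply (rule conjI[OF Mp])
    apply (rule exI[of _ "K+1"]) apply (rule conjI[OF Lp])
    using A B by (rule conjI)
qed


declare split_paired_All[simp del] split_paired_Ex[simp del]


lemma flow_mvt:
  assumes fl: "isflow Fl f" and "0 \<le> \<sigma>" and B: "\<And>u. u \<in> {0..\<sigma>} \<Longrightarrow> norm (f (Fl u y)) \<le> M"
  shows "norm (Fl \<sigma> y - y) \<le> M * \<sigma>"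
proof -
  have "norm (Fl \<sigma> y - Fl 0 y) \<le> M * (\<sigma> - 0)"
  proof (rule vbound[where f'="\<lambda>u. f (Fl u y)"])
    show "0 \<le> \<sigma>" by fact
    show "((\<lambda>u. Fl u y) has_vector_derivative f (Fl x y)) (at x within {0..\<sigma>})" for x
      by (rule has_vector_derivative_at_within[OF isflow_deriv[OF fl]])
    show "norm (f (Fl x y)) \<le> M" if "x \<in> {0..\<sigma>}" for x using B[OF that] .
  qed
  then show ?thesis using fl by simp
qed

lemma flow_stay_fwd:
  assumes fl: "isflow Fl f" and M: "M > 0" and Rpos: "R > 0" and B: "\<forall>x\<in>cball c R. norm (f x) \<le> M"
    and y: "y \<in> cball c (R/4)" and s: "0 \<le> \<sigma>" "\<sigma> \<le> R/(4*M)"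
  shows "norm (Fl \<sigma> y - y) \<le> M * \<sigma>" and "Fl \<sigma> y \<in> cball c R"
proof -
  define T where "T = R/(4*M)"
  have stay: "\<sigma>' \<le> T \<longrightarrow> Fl \<sigma>' y \<in> cball c R" if "\<sigma>' \<ge> 0" for \<sigma>'
  proof (rule continuation[OF _ that])
    fix S :: real assume S0: "S \<ge> 0" and hyp: "\<forall>\<sigma>. 0 \<le> \<sigma> \<and> \<sigma> < S \<longrightarrow> (\<sigma> \<le> T \<longrightarrow> Fl \<sigma> y \<in> cball c R)"
    show "\<exists>e>0. \<forall>\<sigma>. 0 \<le> \<sigma> \<and> \<sigma> < S + e \<longrightarrow> (\<sigma> \<le> T \<longrightarrow> Fl \<sigma> y \<in> cball c R)"
    proof (cases "S > T")
      case True
      then show ?thesis using hyp by (intro exI[of _ 1]) auto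
    next
      case False
      then have ST: "S \<le> T" by simp
      have R8: "R/8 > 0" using Rpos by simp
      obtain d where d: "d > 0" "\<forall>u. dist u S < d \<longrightarrow> dist (Fl u y) (Fl S y) < R/8"
        using isflow_cont[OF fl, of S y] R8 unfolding continuous_at_eps_delta by blast
      define u0 where "u0 = max 0 (S - d/2)"
      have u0: "0 \<le> u0" "u0 \<le> S" "dist u0 S < d" using d S0 by (auto simp: u0_def dist_real_def)
      have yu0: "norm (Fl u0 y - y) \<le> R/4"
      proof (cases "u0 = 0")
        case True then show ?thesis using isflow_0[OF fl, of y] Rpos by simp
      next
        case False
        then have "u0 < S" using u0_def d by auto
        have "norm (Fl u0 y - y) \<le> M * u0"
        proof (rule flow_mvt[OF fl u0(1)])
          fix u assume "u \<in> {0..u0}"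
          then have "Fl u y \<in> cball c R" using hyp \<open>u0 < S\<close> ST by auto
          then show "norm (f (Fl u y)) \<le> M" using B by blast
        qed
        also have "\<dots> \<le> M * T" using u0 ST M by (simp add: mult_left_mono)
        also have "\<dots> = R/4" using M by (simp add: T_def)
        finally show ?thesis .
      qed
      show ?thesis
      proof (intro exI[of _ "d/2"] conjI allI impI)
        show "d/2 > 0" using d by simp
        fix u assume u: "0 \<le> u \<and> u < S + d/2" and uT: "u \<le> T"
        show "Fl u y \<in> cball c R"
        proof (cases "u < S")
          case True then show ?thesis using hyp u uT by blast
        next
          case False
          then have "dist u S < d" using u by (auto simp: dist_real_def)
          then have 1: "dist (Fl u y) (Fl S y) < R/8" using d by blast
          have "dist (Fl u0 y) (Fl S y) < R/8" using d(2) u0(3) by blast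
          then have 2: "dist (Fl S y) (Fl u0 y) < R/8" by (simp add: dist_commute)
          have 3: "dist (Fl u0 y) y \<le> R/4" using yu0 by (simp add: dist_norm)
          have 4: "dist y c \<le> R/4" using y by (simp add: dist_commute)
          have "dist (Fl u y) c \<le> dist (Fl u y) (Fl S y) + dist (Fl S y) c" by (rule dist_triangle)
          moreover have "dist (Fl S y) c \<le> dist (Fl S y) (Fl u0 y) + dist (Fl u0 y) c" by (rule dist_triangle)
          moreover have "dist (Fl u0 y) c \<le> dist (Fl u0 y) y + dist y c" by (rule dist_triangle)
          ultimately have "dist (Fl u y) c \<le> R" using 1 2 3 4 Rpos by linarith
          then show ?thesis by (simp add: dist_commute)
        qed
      qed
    qed
  qed
  show "norm (Fl \<sigma> y - y) \<le> M * \<sigma>"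
  proof (rule flow_mvt[OF fl s(1)])
    fix u assume "u \<in> {0..\<sigma>}"
    then have "Fl u y \<in> cball c R" using stay s T_def by auto
    then show "norm (f (Fl u y)) \<le> M" using B by blast
  qed
  show "Fl \<sigma> y \<in> cball c R" using stay s T_def by auto
qed



lemma flow_stay:
  assumes fl: "isflow Fl f" and M: "M > 0" and Rpos: "R > 0" and B: "\<forall>x\<in>cball c R. norm (f x) \<le> M"
    and y: "y \<in> cball c (R/4)" and s: "\<bar>\<sigma>\<bar> \<le> R/(4*M)"
  shows "norm (Fl \<sigma> y - y) \<le> M * \<bar>\<sigma>\<bar>" and "Fl \<sigma> y \<in> cball c R"
proof -
  have "norm (Fl \<sigma> y - y) \<le> M * \<bar>\<sigma>\<bar> \<and> Fl \<sigma> y \<in> cball c R"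
  proof (cases "\<sigma> \<ge> 0")
    case True
    then show ?thesis using flow_stay_fwd[OF fl M Rpos B y True] s by simp
  next
    case False
    have B': "\<forall>x\<in>cball c R. norm (- f x) \<le> M" using B by simp
    have "- \<sigma> \<ge> 0" "- \<sigma> \<le> R/(4*M)" using False s by auto
    from flow_stay_fwd[OF isflow_rev[OF fl] M Rpos B' y this] show ?thesis using False by simp
  qed
  then show "norm (Fl \<sigma> y - y) \<le> M * \<bar>\<sigma>\<bar>" and "Fl \<sigma> y \<in> cball c R" by auto
qed

lemma flow_lip_fwd:
  assumes fl: "isflow Fl f" and M: "M > 0" and Rpos: "R > 0" and B: "\<forall>x\<in>cball c R. norm (f x) \<le> M"
    and L: "L \<ge> 0" "\<forall>a\<in>cball c R. \<forall>b\<in>cball c R. norm (f a - f b) \<le> L * norm (a - b)"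
    and a: "a \<in> cball c (R/4)" and b: "b \<in> cball c (R/4)" and s: "0 \<le> \<sigma>" "\<sigma> \<le> R/(4*M)"
  shows "norm (Fl \<sigma> a - Fl \<sigma> b) \<le> norm (a - b) * exp (L * \<sigma>)"
proof -
  have "norm (Fl \<sigma> a - Fl \<sigma> b) \<le> norm (Fl 0 a - Fl 0 b) * exp (L * \<sigma>)"
  proof (rule gronwall[where f=f and T="R/(4*M)"])
    show "0 \<le> R/(4*M)" using M Rpos by simp
    show "0 \<le> L" by fact
    show "((\<lambda>u. Fl u a) has_vector_derivative f (Fl x a)) (at x)" for x by (rule isflow_deriv[OF fl])
    show "((\<lambda>u. Fl u b) has_vector_derivative f (Fl x b)) (at x)" for x by (rule isflow_deriv[OF fl])
    show "norm (f (Fl x a) - f (Fl x b)) \<le> L * norm (Fl x a - Fl x b)" if "x \<in> {0..R/(4*M)}" for x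
    proof -
      have "\<bar>x\<bar> \<le> R/(4*M)" using that by auto
      then have "Fl x a \<in> cball c R" "Fl x b \<in> cball c R"
        using flow_stay[OF fl M Rpos B a] flow_stay[OF fl M Rpos B b] by auto
      then show ?thesis using L(2) by blast
    qed
    show "\<sigma> \<in> {0..R/(4*M)}" using s by auto
  qed
  then show ?thesis using fl by simp
qed

lemma flow_lip:
  assumes fl: "isflow Fl f" and M: "M > 0" and Rpos: "R > 0" and B: "\<forall>x\<in>cball c R. norm (f x) \<le> M"
    and L: "L \<ge> 0" "\<forall>a\<in>cball c R. \<forall>b\<in>cball c R. norm (f a - f b) \<le> L * norm (a - b)"
    and a: "a \<in> cball c (R/4)" and b: "b \<in> cball c (R/4)" and s: "\<bar>\<sigma>\<bar> \<le> R/(4*M)"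
  shows "norm (Fl \<sigma> a - Fl \<sigma> b) \<le> norm (a - b) * exp (L * \<bar>\<sigma>\<bar>)"
proof (cases "\<sigma> \<ge> 0")
  case True
  then show ?thesis using flow_lip_fwd[OF fl M Rpos B L a b True] s by simp
next
  case False
  have B': "\<forall>x\<in>cball c R. norm (- f x) \<le> M" using B by simp
  have L': "\<forall>a\<in>cball c R. \<forall>b\<in>cball c R. norm (- f a - - f b) \<le> L * norm (a - b)"
  proof (intro ballI)
    fix a b assume "a \<in> cball c R" "b \<in> cball c R"
    then have "norm (f a - f b) \<le> L * norm (a - b)" using L(2) by blast
    moreover have "norm (- f a - - f b) = norm (f a - f b)" by (simp add: norm_minus_commute)
    ultimately show "norm (- f a - - f b) \<le> L * norm (a - b)" by simp
  qed
  have "- \<sigma> \<ge> 0" "- \<sigma> \<le> R/(4*M)" using False s by auto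
  from flow_lip_fwd[OF isflow_rev[OF fl] M Rpos B' L(1) L' a b this] show ?thesis using False by simp
qed

lemma flow_local:
  assumes fl: "isflow Fl f" and f: "C1 f Df"
  shows "\<exists>r>0. \<exists>T>0. \<exists>M>0. \<exists>K\<ge>1.
     (\<forall>y\<in>cball c r. \<forall>\<sigma>. \<bar>\<sigma>\<bar> \<le> T \<longrightarrow> norm (Fl \<sigma> y - y) \<le> M * \<bar>\<sigma>\<bar>) \<and>
     (\<forall>a\<in>cball c r. \<forall>b\<in>cball c r. \<forall>\<sigma>. \<bar>\<sigma>\<bar> \<le> T \<longrightarrow> norm (Fl \<sigma> a - Fl \<sigma> b) \<le> K * norm (a - b))"
proof -
  obtain R M L where R: "R > 0" "M > 0" "L > 0" and B: "\<forall>x\<in>cball c R. norm (f x) \<le> M"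
    and Lp: "\<forall>a\<in>cball c R. \<forall>b\<in>cball c R. norm (f a - f b) \<le> L * norm (a - b)"
    using C1_local[OF f, of c] by blast
  define T where "T = R/(4*M)"
  define K where "K = exp (L * T)"
  have T: "T > 0" using R by (simp add: T_def)
  have K: "K \<ge> 1" using R T by (simp add: K_def)
  have 1: "\<forall>y\<in>cball c (R/4). \<forall>\<sigma>. \<bar>\<sigma>\<bar> \<le> T \<longrightarrow> norm (Fl \<sigma> y - y) \<le> M * \<bar>\<sigma>\<bar>"
    using flow_stay(1)[OF fl R(2) R(1) B] T_def by blast
  have 2: "\<forall>a\<in>cball c (R/4). \<forall>b\<in>cball c (R/4). \<forall>\<sigma>. \<bar>\<sigma>\<bar> \<le> T \<longrightarrow> norm (Fl \<sigma> a - Fl \<sigma> b) \<le> K * norm (a - b)"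
  proof (intro ballI allI impI)
    fix a b \<sigma> assume a: "a \<in> cball c (R/4)" and b: "b \<in> cball c (R/4)" and s: "\<bar>\<sigma>\<bar> \<le> T"
    have "norm (Fl \<sigma> a - Fl \<sigma> b) \<le> norm (a - b) * exp (L * \<bar>\<sigma>\<bar>)"
      using flow_lip[OF fl R(2) R(1) B _ Lp a b] R s T_def by simp
    also have "\<dots> \<le> norm (a - b) * K" unfolding K_def
      using s R by (intro mult_left_mono) auto
    finally show "norm (Fl \<sigma> a - Fl \<sigma> b) \<le> K * norm (a - b)" by (simp add: mult.commute)
  qed
  have "R/4 > 0" using R by simp
  show ?thesis
    apply (rule exI[of _ "R/4"], rule conjI[OF \<open>R/4 > 0\<close>])
    apply (rule exI[of _ T], rule conjI[OF T])
    apply (rule exI[of _ M], rule conjI[OF R(2)])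
    apply (rule exI[of _ K], rule conjI[OF K])
    using 1 2 by (rule conjI)
qed



lemma chain_vd:
  assumes "(\<gamma> has_vector_derivative v) (at s)" "(f has_derivative D) (at (\<gamma> s))" "linear D"
  shows "((\<lambda>u. f (\<gamma> u)) has_vector_derivative D v) (at s)"
proof -
  have "((\<lambda>u. f (\<gamma> u)) has_derivative (\<lambda>h. D (h *\<^sub>R v))) (at s)"
    using has_derivative_compose[OF assms(1)[unfolded has_vector_derivative_def] assms(2)] .
  moreover have "(\<lambda>h. D (h *\<^sub>R v)) = (\<lambda>h. h *\<^sub>R D v)" using assms(3) by (simp add: linear_scale)
  ultimately show ?thesis by (simp add: has_vector_derivative_def)
qed

lemma C1_G_cont:
  assumes f: "C1 f Df" and e: "\<epsilon> > 0"
  shows "\<exists>r>0. \<forall>z\<in>cball c r. norm (Df z (f z) - Df c (f c)) \<le> \<epsilon>"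
proof -
  obtain R M L where R: "R > 0" "M > 0" "L > 0" and B: "\<forall>x\<in>cball c R. norm (f x) \<le> M"
    and Lp: "\<forall>a\<in>cball c R. \<forall>b\<in>cball c R. norm (f a - f b) \<le> L * norm (a - b)"
    using C1_local[OF f, of c] by blast
  obtain K where K: "K > 0" "\<forall>h. norm (Df c h) \<le> K * norm h" using C1_bnd[OF f] by blast
  have e2: "\<epsilon> / (2 * M) > 0" using e R by simp
  obtain r1 where r1: "r1 > 0" "\<forall>x\<in>ball c r1. \<forall>h. norm (Df x h - Df c h) \<le> \<epsilon> / (2 * M) * norm h"
    using C1_contD[OF f e2, of c] by blast
  define r where "r = min R (min (r1/2) (\<epsilon> / (2 * K * L)))"
  have r: "r > 0" using R r1 K e by (simp add: r_def)
  have "norm (Df z (f z) - Df c (f c)) \<le> \<epsilon>" if z: "z \<in> cball c r" for z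
  proof -
    have zR: "z \<in> cball c R" "c \<in> cball c R" using z R by (auto simp: r_def)
    have zb: "z \<in> ball c r1" using z r1 by (auto simp: r_def)
    have eq: "Df z (f z) - Df c (f c) = (Df z (f z) - Df c (f z)) + Df c (f z - f c)"
      using C1_lin[OF f, of c] by (simp add: linear_diff)
    have "norm (Df z (f z) - Df c (f c)) \<le> norm (Df z (f z) - Df c (f z)) + norm (Df c (f z - f c))"
      by (simp only: eq) (rule norm_triangle_ineq)
    also have "norm (Df z (f z) - Df c (f z)) \<le> \<epsilon> / (2 * M) * norm (f z)" using r1(2) zb by blast
    also have "\<dots> \<le> \<epsilon> / (2 * M) * M" using B zR e R by (intro mult_left_mono) auto
    also have "\<dots> = \<epsilon> / 2" using R by simp
    also have "norm (Df c (f z - f c)) \<le> K * norm (f z - f c)" using K(2) by blast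
    also have "\<dots> \<le> K * (L * norm (z - c))" using Lp zR K by (intro mult_left_mono) auto
    also have "\<dots> \<le> K * (L * (\<epsilon> / (2 * K * L)))"
    proof -
      have "norm (z - c) \<le> \<epsilon> / (2 * K * L)" using z by (simp add: r_def dist_norm norm_minus_commute)
      then show ?thesis using K R by (intro mult_left_mono) auto
    qed
    also have "\<dots> = \<epsilon> / 2" using K R by (simp add: field_simps)
    finally show ?thesis by simp
  qed
  then show ?thesis using r by (intro exI[of _ r]) blast
qed

lemma flow_expand_fwd:
  assumes fl: "isflow Fl f" and f: "C1 f Df" and e: "\<epsilon> > 0"
  shows "\<exists>r>0. \<exists>T>0. \<forall>y\<in>cball c r. \<forall>\<sigma>. 0 \<le> \<sigma> \<and> \<sigma> \<le> T \<longrightarrow>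
     norm (Fl \<sigma> y - y - \<sigma> *\<^sub>R f y - (\<sigma>\<^sup>2/2) *\<^sub>R Df y (f y)) \<le> \<epsilon> * \<sigma>\<^sup>2"
proof -
  define G where "G z = Df z (f z)" for z
  have e2: "\<epsilon>/2 > 0" using e by simp
  have "\<exists>r>0. \<forall>z\<in>cball c r. norm (G z - G c) \<le> \<epsilon>/2"
    unfolding G_def by (rule C1_G_cont[OF f e2])
  then obtain R0 where R0: "R0 > 0" "\<forall>z\<in>cball c R0. norm (G z - G c) \<le> \<epsilon>/2" by blast
  obtain R M L :: real where R: "R > 0" "M > 0" "L > 0" and B: "\<forall>x\<in>cball c R. norm (f x) \<le> M"
    and Lp: "\<forall>a\<in>cball c R. \<forall>b\<in>cball c R. norm (f a - f b) \<le> L * norm (a - b)"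
    using C1_local[OF f, of c] by blast
  define Rm where "Rm = min R R0"
  have Rm: "Rm > 0" using R R0 by (simp add: Rm_def)
  have Bm: "\<forall>x\<in>cball c Rm. norm (f x) \<le> M" using B by (auto simp: Rm_def)
  have Gm: "\<forall>z\<in>cball c Rm. norm (G z - G c) \<le> \<epsilon>/2" using R0 by (auto simp: Rm_def)
  define T where "T = Rm/(4*M)"
  have T: "T > 0" using Rm R by (simp add: T_def)
  have main: "norm (Fl \<sigma> y - y - \<sigma> *\<^sub>R f y - (\<sigma>\<^sup>2/2) *\<^sub>R G y) \<le> \<epsilon> * \<sigma>\<^sup>2"
    if y: "y \<in> cball c (Rm/4)" and s: "0 \<le> \<sigma>" "\<sigma> \<le> T" for y \<sigma>
  proof -
    have yin: "y \<in> cball c Rm" using y Rm by auto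
    have stay: "Fl u y \<in> cball c Rm" if "u \<in> {0..\<sigma>}" for u
      using flow_stay(2)[OF fl R(2) Rm Bm y, of u] that s T_def by auto
    define uu where "uu = (\<lambda>s. f (Fl s y) - f y - s *\<^sub>R G y)"
    have du: "(uu has_vector_derivative (G (Fl s y) - G y)) (at s)" for s
    proof -
      have "((\<lambda>u. f (Fl u y)) has_vector_derivative Df (Fl s y) (f (Fl s y))) (at s)"
        by (rule chain_vd[OF isflow_deriv[OF fl] C1_deriv[OF f] C1_lin[OF f]])
      then have "((\<lambda>u. f (Fl u y) - f y - u *\<^sub>R G y) has_vector_derivative (Df (Fl s y) (f (Fl s y)) - 0 - 1 *\<^sub>R G y)) (at s)"
        by (intro derivative_intros) (auto intro!: derivative_eq_intros simp: has_vector_derivative_def)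
      then show ?thesis by (simp add: uu_def G_def)
    qed
    have ub: "norm (uu s) \<le> \<epsilon> * s" if "s \<in> {0..\<sigma>}" for s
    proof -
      have "norm (uu s - uu 0) \<le> \<epsilon> * (s - 0)"
      proof (rule vbound[where f'="\<lambda>s. G (Fl s y) - G y"])
        show "0 \<le> s" using that by simp
        show "(uu has_vector_derivative G (Fl x y) - G y) (at x within {0..s})" for x
          using du has_vector_derivative_at_within by blast
        show "norm (G (Fl x y) - G y) \<le> \<epsilon>" if "x \<in> {0..s}" for x
        proof -
          have "x \<in> {0..\<sigma>}" using that \<open>s \<in> {0..\<sigma>}\<close> by auto
          then have "norm (G (Fl x y) - G c) \<le> \<epsilon>/2" using Gm stay by blast
          moreover have "norm (G y - G c) \<le> \<epsilon>/2" using Gm yin by blast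
          ultimately show ?thesis using norm_triangle_ineq4[of "G (Fl x y) - G c" "G y - G c"] by simp
        qed
      qed
      moreover have "uu 0 = 0" using fl by (simp add: uu_def)
      ultimately show ?thesis by simp
    qed
    define ee where "ee = (\<lambda>s. Fl s y - y - s *\<^sub>R f y - (s\<^sup>2/2) *\<^sub>R G y)"
    have de: "(ee has_vector_derivative uu s) (at s)" for s
    proof -
      have "((\<lambda>s. Fl s y - y - s *\<^sub>R f y - (s\<^sup>2/2) *\<^sub>R G y) has_vector_derivative
              (f (Fl s y) - 0 - 1 *\<^sub>R f y - (2 * s / 2) *\<^sub>R G y)) (at s)"
        using isflow_deriv[OF fl]
        by (intro derivative_intros) (auto intro!: derivative_eq_intros simp: has_vector_derivative_def)
      then show ?thesis by (simp add: ee_def uu_def)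
    qed
    have "norm (ee \<sigma> - ee 0) \<le> (\<epsilon> * \<sigma>) * (\<sigma> - 0)"
    proof (rule vbound[where f'=uu])
      show "0 \<le> \<sigma>" by fact
      show "(ee has_vector_derivative uu x) (at x within {0..\<sigma>})" for x
        using de has_vector_derivative_at_within by blast
      show "norm (uu x) \<le> \<epsilon> * \<sigma>" if "x \<in> {0..\<sigma>}" for x
      proof -
        have "\<epsilon> * x \<le> \<epsilon> * \<sigma>" using that e by (intro mult_left_mono) auto
        then show ?thesis using ub[OF that] by linarith
      qed
    qed
    moreover have "ee 0 = 0" using fl by (simp add: ee_def)
    ultimately have "norm (ee \<sigma>) \<le> \<epsilon> * \<sigma>\<^sup>2" by (simp add: power2_eq_square mult.assoc)
    then show ?thesis by (simp add: ee_def)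
  qed
  have R4: "Rm/4 > 0" using Rm by simp
  show ?thesis
    apply (rule exI[of _ "Rm/4"], rule conjI[OF R4])
    apply (rule exI[of _ T], rule conjI[OF T])
    using main unfolding G_def by blast
qed



lemma flow_expand:
  assumes fl: "isflow Fl f" and f: "C1 f Df" and e: "\<epsilon> > 0"
  shows "\<exists>r>0. \<exists>T>0. \<forall>y\<in>cball c r. \<forall>\<sigma>. \<bar>\<sigma>\<bar> \<le> T \<longrightarrow>
     norm (Fl \<sigma> y - y - \<sigma> *\<^sub>R f y - (\<sigma>\<^sup>2/2) *\<^sub>R Df y (f y)) \<le> \<epsilon> * \<sigma>\<^sup>2"
proof -
  obtain r1 T1 where r1: "r1 > 0" "T1 > 0" and E1: "\<forall>y\<in>cball c r1. \<forall>\<sigma>. 0 \<le> \<sigma> \<and> \<sigma> \<le> T1 \<longrightarrow>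
     norm (Fl \<sigma> y - y - \<sigma> *\<^sub>R f y - (\<sigma>\<^sup>2/2) *\<^sub>R Df y (f y)) \<le> \<epsilon> * \<sigma>\<^sup>2"
    using flow_expand_fwd[OF fl f e, of c] by blast
  obtain r2 T2 where r2: "r2 > 0" "T2 > 0" and E2: "\<forall>y\<in>cball c r2. \<forall>\<sigma>. 0 \<le> \<sigma> \<and> \<sigma> \<le> T2 \<longrightarrow>
     norm (Fl (- \<sigma>) y - y - \<sigma> *\<^sub>R (- f y) - (\<sigma>\<^sup>2/2) *\<^sub>R (- Df y (- f y))) \<le> \<epsilon> * \<sigma>\<^sup>2"
    using flow_expand_fwd[OF isflow_rev[OF fl] C1_rev[OF f] e, of c] by blast
  define r where "r = min r1 r2"
  define T where "T = min T1 T2"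
  have "norm (Fl \<sigma> y - y - \<sigma> *\<^sub>R f y - (\<sigma>\<^sup>2/2) *\<^sub>R Df y (f y)) \<le> \<epsilon> * \<sigma>\<^sup>2"
    if y: "y \<in> cball c r" and s: "\<bar>\<sigma>\<bar> \<le> T" for y \<sigma>
  proof (cases "\<sigma> \<ge> 0")
    case True
    then show ?thesis using E1 y s by (auto simp: r_def T_def)
  next
    case False
    have "y \<in> cball c r2" "0 \<le> - \<sigma> \<and> - \<sigma> \<le> T2" using y s False by (auto simp: r_def T_def)
    then have "norm (Fl (- (- \<sigma>)) y - y - (- \<sigma>) *\<^sub>R (- f y) - ((- \<sigma>)\<^sup>2/2) *\<^sub>R (- Df y (- f y))) \<le> \<epsilon> * (- \<sigma>)\<^sup>2"
      using E2 by blast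
    moreover have "Df y (- f y) = - Df y (f y)" using C1_lin[OF f] by (simp add: linear_neg)
    ultimately show ?thesis by simp
  qed
  moreover have "r > 0" "T > 0" using r1 r2 by (auto simp: r_def T_def)
  ultimately show ?thesis by (intro exI[of _ r] conjI exI[of _ T]) auto
qed

lemma C1_linz:
  assumes f: "C1 f Df" and e: "\<epsilon> > 0"
  shows "\<exists>r>0. \<forall>a\<in>cball c r. \<forall>b\<in>cball c r. norm (f a - f b - Df b (a - b)) \<le> \<epsilon> * norm (a - b)"
proof -
  have e2: "\<epsilon>/2 > 0" using e by simp
  obtain r0 where r0: "r0 > 0" "\<forall>x\<in>ball c r0. \<forall>h. norm (Df x h - Df c h) \<le> \<epsilon>/2 * norm h"
    using C1_contD[OF f e2, of c] by blast
  define r where "r = r0/2"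
  have r: "r > 0" using r0 by (simp add: r_def)
  have "norm (f a - f b - Df b (a - b)) \<le> \<epsilon> * norm (a - b)"
    if a: "a \<in> cball c r" and b: "b \<in> cball c r" for a b
  proof -
    have "norm (f a - f b - Df b (a - b)) \<le> norm (a - b) * \<epsilon>"
    proof (rule differentiable_bound_linearization[where S="cball c r" and f'=Df and ?x0.0=b and a=b and b=a])
      show "b + t *\<^sub>R (a - b) \<in> cball c r" if "t \<in> {0..1}" for t
      proof -
        have "b + t *\<^sub>R (a - b) = (1 - t) *\<^sub>R b + t *\<^sub>R a" by (simp add: algebra_simps)
        moreover have "(1 - t) *\<^sub>R b + t *\<^sub>R a \<in> cball c r"
          using convex_cball[of c r] a b that unfolding convex_def by auto
        ultimately show ?thesis by simp
      qed
      show "(f has_derivative Df x) (at x within cball c r)" for x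
        using C1_deriv[OF f] has_derivative_at_withinI by blast
      show "onorm (Df x - Df b) \<le> \<epsilon>" if x: "x \<in> cball c r" for x
      proof (rule onorm_le)
        fix h
        have "x \<in> ball c r0" "b \<in> ball c r0" using x b r0 by (auto simp: r_def)
        then have 1: "norm (Df x h - Df c h) \<le> \<epsilon>/2 * norm h" and 2: "norm (Df b h - Df c h) \<le> \<epsilon>/2 * norm h"
          using r0(2) by blast+
        have "norm (Df x h - Df b h) \<le> norm (Df x h - Df c h) + norm (Df b h - Df c h)"
          using norm_triangle_ineq4[of "Df x h - Df c h" "Df b h - Df c h"] by simp
        then show "norm ((Df x - Df b) h) \<le> \<epsilon> * norm h" using 1 2 by (simp add: fun_diff_def)
      qed
      show "b \<in> cball c r" by fact
    qed
    then show ?thesis by (simp add: mult.commute)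
  qed
  then show ?thesis using r by (intro exI[of _ r]) blast
qed



lemma comp_exp:
  assumes flA: "isflow A a" and fA: "C1 a Da" and flB: "isflow B b" and fB: "C1 b Db" and e: "\<eta> > 0"
  shows "\<exists>r>0. \<exists>T>0. \<forall>y\<in>cball c r. \<forall>s t. \<bar>s\<bar> \<le> T \<and> \<bar>t\<bar> \<le> T \<longrightarrow>
    norm (B s (A t y) - (y + t *\<^sub>R a y + (t\<^sup>2/2) *\<^sub>R Da y (a y) + s *\<^sub>R b y + (s * t) *\<^sub>R Db y (a y)
       + (s\<^sup>2/2) *\<^sub>R Db y (b y))) \<le> \<eta> * (s\<^sup>2 + t\<^sup>2)"
proof -
  define Ga where "Ga z = Da z (a z)" for z
  define Gb where "Gb z = Db z (b z)" for z
  define \<eta>1 where "\<eta>1 = \<eta>/8"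
  have \<eta>1: "\<eta>1 > 0" using e by (simp add: \<eta>1_def)
  have "\<exists>r>0. \<exists>T>0. \<forall>y\<in>cball c r. \<forall>\<sigma>. \<bar>\<sigma>\<bar> \<le> T \<longrightarrow>
     norm (A \<sigma> y - y - \<sigma> *\<^sub>R a y - (\<sigma>\<^sup>2/2) *\<^sub>R Ga y) \<le> \<eta>1 * \<sigma>\<^sup>2"
    unfolding Ga_def by (rule flow_expand[OF flA fA \<eta>1])
  then obtain rA TA where rA: "rA > 0" "TA > 0" and EA: "\<forall>y\<in>cball c rA. \<forall>\<sigma>. \<bar>\<sigma>\<bar> \<le> TA \<longrightarrow>
     norm (A \<sigma> y - y - \<sigma> *\<^sub>R a y - (\<sigma>\<^sup>2/2) *\<^sub>R Ga y) \<le> \<eta>1 * \<sigma>\<^sup>2" by blast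
  have "\<exists>r>0. \<exists>T>0. \<forall>y\<in>cball c r. \<forall>\<sigma>. \<bar>\<sigma>\<bar> \<le> T \<longrightarrow>
     norm (B \<sigma> y - y - \<sigma> *\<^sub>R b y - (\<sigma>\<^sup>2/2) *\<^sub>R Gb y) \<le> \<eta>1 * \<sigma>\<^sup>2"
    unfolding Gb_def by (rule flow_expand[OF flB fB \<eta>1])
  then obtain rB TB where rB: "rB > 0" "TB > 0" and EB: "\<forall>y\<in>cball c rB. \<forall>\<sigma>. \<bar>\<sigma>\<bar> \<le> TB \<longrightarrow>
     norm (B \<sigma> y - y - \<sigma> *\<^sub>R b y - (\<sigma>\<^sup>2/2) *\<^sub>R Gb y) \<le> \<eta>1 * \<sigma>\<^sup>2" by blast
  obtain rL TL M KL :: real where rL: "rL > 0" "TL > 0" "M > 0" "KL \<ge> 1"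
    and SA: "\<forall>y\<in>cball c rL. \<forall>\<sigma>. \<bar>\<sigma>\<bar> \<le> TL \<longrightarrow> norm (A \<sigma> y - y) \<le> M * \<bar>\<sigma>\<bar>"
    using flow_local[OF flA fA, of c] by blast
  define \<eta>2 where "\<eta>2 = \<eta> / (2 * M)"
  have \<eta>2: "\<eta>2 > 0" using e rL by (simp add: \<eta>2_def)
  obtain rl where rl: "rl > 0" and LZ: "\<forall>p\<in>cball c rl. \<forall>q\<in>cball c rl. norm (b p - b q - Db q (p - q)) \<le> \<eta>2 * norm (p - q)"
    using C1_linz[OF fB \<eta>2, of c] by blast
  have "\<exists>r>0. \<forall>z\<in>cball c r. norm (Gb z - Gb c) \<le> \<eta>1"
    unfolding Gb_def by (rule C1_G_cont[OF fB \<eta>1])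
  then obtain rG where rG: "rG > 0" and GC: "\<forall>z\<in>cball c rG. norm (Gb z - Gb c) \<le> \<eta>1" by blast
  have "\<exists>r>0. \<forall>z\<in>cball c r. norm (Ga z - Ga c) \<le> 1"
    unfolding Ga_def by (rule C1_G_cont[OF fA zero_less_one])
  then obtain rGa where rGa: "rGa > 0" and GCa: "\<forall>z\<in>cball c rGa. norm (Ga z - Ga c) \<le> 1" by blast
  obtain rD where rD: "rD > 0" and DC: "\<forall>x\<in>ball c rD. \<forall>h. norm (Db x h - Db c h) \<le> 1 * norm h"
    using C1_contD[OF fB zero_less_one, of c] by blast
  obtain Kb where Kb: "Kb > 0" "\<forall>h. norm (Db c h) \<le> Kb * norm h" using C1_bnd[OF fB] by blast
  define Ca where "Ca = norm (Ga c) + 1"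
  define C where "C = (Kb + 1) * (Ca/2 + \<eta>1)"
  have "Ca > 0" unfolding Ca_def by (simp add: add_nonneg_pos)
  then have "Ca/2 + \<eta>1 > 0" using \<eta>1 by simp
  then have C: "C > 0" using Kb(1) unfolding C_def by simp
  define \<rho>0 where "\<rho>0 = min (min rA rB) (min (min rL rl) (min rG (min rGa (rD/2))))"
  have \<rho>0: "\<rho>0 > 0" using rA rB rL rl rG rGa rD by (simp add: \<rho>0_def)
  define r where "r = \<rho>0 / 2"
  define T where "T = min (min TA TB) (min TL (min (\<rho>0 / (2 * M)) (\<eta> / (8 * C))))"
  have r: "r > 0" using \<rho>0 by (simp add: r_def)
  have T: "T > 0" using rA rB rL \<rho>0 e C by (simp add: T_def)
  have main: "norm (B s (A t y) - (y + t *\<^sub>R a y + (t\<^sup>2/2) *\<^sub>R Ga y + s *\<^sub>R b y + (s * t) *\<^sub>R Db y (a y)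
       + (s\<^sup>2/2) *\<^sub>R Gb y)) \<le> \<eta> * (s\<^sup>2 + t\<^sup>2)"
    if y: "y \<in> cball c r" and s: "\<bar>s\<bar> \<le> T" and t: "\<bar>t\<bar> \<le> T" for y s t
  proof -
    define z where "z = A t y"
    have yr: "y \<in> cball c \<rho>0" using y \<rho>0 by (auto simp: r_def)
    have zy: "norm (z - y) \<le> M * \<bar>t\<bar>" using SA yr t unfolding z_def
      by (auto simp: \<rho>0_def T_def)
    have "M * \<bar>t\<bar> \<le> M * (\<rho>0 / (2 * M))" using t rL by (intro mult_left_mono) (auto simp: T_def)
    also have "\<dots> = \<rho>0 / 2" using rL by simp
    finally have "norm (z - y) \<le> \<rho>0/2" using zy by simp
    then have "dist y z \<le> \<rho>0/2" by (simp add: dist_norm norm_minus_commute)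
    moreover have "dist c y \<le> \<rho>0/2" using y by (simp add: r_def)
    moreover have "dist c z \<le> dist c y + dist y z" by (rule dist_triangle)
    ultimately have zr: "z \<in> cball c \<rho>0" by simp
    define e1 where "e1 = B s z - z - s *\<^sub>R b z - (s\<^sup>2/2) *\<^sub>R Gb z"
    define e2 where "e2 = z - y - t *\<^sub>R a y - (t\<^sup>2/2) *\<^sub>R Ga y"
    define e3 where "e3 = b z - b y - Db y (z - y)"
    define e4 where "e4 = Gb z - Gb y"
    define \<rho> where "\<rho> = (t\<^sup>2/2) *\<^sub>R Ga y + e2"
    have n1: "norm e1 \<le> \<eta>1 * s\<^sup>2" unfolding e1_def using EB zr s by (auto simp: \<rho>0_def T_def)
    have n2: "norm e2 \<le> \<eta>1 * t\<^sup>2" unfolding e2_def z_def using EA yr t by (auto simp: \<rho>0_def T_def)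
    have n3: "norm e3 \<le> \<eta>2 * (M * \<bar>t\<bar>)"
    proof -
      have "norm e3 \<le> \<eta>2 * norm (z - y)" unfolding e3_def using LZ zr yr by (auto simp: \<rho>0_def)
      also have "\<dots> \<le> \<eta>2 * (M * \<bar>t\<bar>)" using zy \<eta>2 by (intro mult_left_mono) auto
      finally show ?thesis .
    qed
    have n4: "norm e4 \<le> 2 * \<eta>1"
    proof -
      have "norm (Gb z - Gb c) \<le> \<eta>1" "norm (Gb y - Gb c) \<le> \<eta>1" using GC zr yr by (auto simp: \<rho>0_def)
      then show ?thesis unfolding e4_def using norm_triangle_ineq4[of "Gb z - Gb c" "Gb y - Gb c"] by simp
    qed
    have nGa: "norm (Ga y) \<le> Ca"
    proof -
      have "norm (Ga y - Ga c) \<le> 1" using GCa yr by (auto simp: \<rho>0_def)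
      then show ?thesis unfolding Ca_def using norm_triangle_sub[of "Ga y" "Ga c"] by simp
    qed
    have n\<rho>: "norm \<rho> \<le> (Ca/2 + \<eta>1) * t\<^sup>2"
    proof -
      have "norm \<rho> \<le> norm ((t\<^sup>2/2) *\<^sub>R Ga y) + norm e2" unfolding \<rho>_def by (rule norm_triangle_ineq)
      also have "norm ((t\<^sup>2/2) *\<^sub>R Ga y) \<le> (t\<^sup>2/2) * Ca" using nGa by (simp add: mult_left_mono)
      finally show ?thesis using n2 by (simp add: algebra_simps)
    qed
    have nD: "norm (Db y \<rho>) \<le> (Kb + 1) * norm \<rho>"
    proof -
      have "y \<in> ball c rD" using yr \<rho>0 rD by (auto simp: \<rho>0_def)
      then have "norm (Db y \<rho> - Db c \<rho>) \<le> 1 * norm \<rho>" using DC by blast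
      moreover have "norm (Db c \<rho>) \<le> Kb * norm \<rho>" using Kb(2) by blast
      ultimately show ?thesis using norm_triangle_sub[of "Db y \<rho>" "Db c \<rho>"] by (simp add: algebra_simps)
    qed
    have lin: "Db y (z - y) = t *\<^sub>R Db y (a y) + Db y \<rho>"
    proof -
      have "z - y = t *\<^sub>R a y + \<rho>" unfolding \<rho>_def e2_def by simp
      then show ?thesis using C1_lin[OF fB, of y] by (simp add: linear_add linear_scale)
    qed
    have ident: "B s (A t y) - (y + t *\<^sub>R a y + (t\<^sup>2/2) *\<^sub>R Ga y + s *\<^sub>R b y + (s * t) *\<^sub>R Db y (a y)
       + (s\<^sup>2/2) *\<^sub>R Gb y) = e1 + e2 + s *\<^sub>R (Db y \<rho> + e3) + (s\<^sup>2/2) *\<^sub>R e4"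
    proof -
      have "e3 = b z - b y - t *\<^sub>R Db y (a y) - Db y \<rho>" unfolding e3_def lin by simp
      then have "b z = e3 + b y + Db y \<rho> + t *\<^sub>R Db y (a y)" by (simp add: algebra_simps)
      then have "s *\<^sub>R b z = s *\<^sub>R (e3 + b y + Db y \<rho> + t *\<^sub>R Db y (a y))" by simp
      then have bz: "s *\<^sub>R b z = s *\<^sub>R e3 + s *\<^sub>R b y + s *\<^sub>R Db y \<rho> + (s * t) *\<^sub>R Db y (a y)"
        by (simp add: algebra_simps)
      show ?thesis unfolding e1_def e2_def e4_def z_def[symmetric]
        by (simp add: algebra_simps bz)
    qed
    have "norm (e1 + e2 + s *\<^sub>R (Db y \<rho> + e3) + (s\<^sup>2/2) *\<^sub>R e4)
        \<le> norm e1 + norm e2 + \<bar>s\<bar> * (norm (Db y \<rho>) + norm e3) + (s\<^sup>2/2) * norm e4"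
    proof -
      have "norm (e1 + e2 + s *\<^sub>R (Db y \<rho> + e3) + (s\<^sup>2/2) *\<^sub>R e4)
          \<le> norm (e1 + e2 + s *\<^sub>R (Db y \<rho> + e3)) + norm ((s\<^sup>2/2) *\<^sub>R e4)" by (rule norm_triangle_ineq)
      also have "norm (e1 + e2 + s *\<^sub>R (Db y \<rho> + e3)) \<le> norm (e1 + e2) + norm (s *\<^sub>R (Db y \<rho> + e3))" by (rule norm_triangle_ineq)
      also have "norm (e1 + e2) \<le> norm e1 + norm e2" by (rule norm_triangle_ineq)
      also have "norm (s *\<^sub>R (Db y \<rho> + e3)) \<le> \<bar>s\<bar> * (norm (Db y \<rho>) + norm e3)"
        by (simp add: mult_left_mono norm_triangle_ineq)
      finally show ?thesis by simp
    qed
    also have "\<dots> \<le> \<eta>1 * s\<^sup>2 + \<eta>1 * t\<^sup>2 + \<bar>s\<bar> * (C * t\<^sup>2 + \<eta>2 * (M * \<bar>t\<bar>)) + (s\<^sup>2/2) * (2 * \<eta>1)"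
    proof -
      have "norm (Db y \<rho>) \<le> C * t\<^sup>2" using nD n\<rho> Kb unfolding C_def
        by (smt (verit) mult_left_mono mult.assoc)
      then have "\<bar>s\<bar> * (norm (Db y \<rho>) + norm e3) \<le> \<bar>s\<bar> * (C * t\<^sup>2 + \<eta>2 * (M * \<bar>t\<bar>))"
        using n3 by (intro mult_left_mono) auto
      moreover have "(s\<^sup>2/2) * norm e4 \<le> (s\<^sup>2/2) * (2 * \<eta>1)" using n4 by (intro mult_left_mono) auto
      ultimately show ?thesis using n1 n2 by linarith
    qed
    also have "\<dots> \<le> \<eta> * (s\<^sup>2 + t\<^sup>2)"
    proof -
      have "\<bar>s\<bar> * (C * t\<^sup>2) \<le> (\<eta> / (8 * C)) * (C * t\<^sup>2)"
        using s C by (intro mult_right_mono) (auto simp: T_def)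
      also have "\<dots> = \<eta>/8 * t\<^sup>2" using C by simp
      finally have a1: "\<bar>s\<bar> * (C * t\<^sup>2) \<le> \<eta>/8 * t\<^sup>2" .
      have "\<bar>s\<bar> * (\<eta>2 * (M * \<bar>t\<bar>)) = \<eta>/2 * (\<bar>s\<bar> * \<bar>t\<bar>)" using rL by (simp add: \<eta>2_def)
      also have "\<dots> \<le> \<eta>/2 * ((s\<^sup>2 + t\<^sup>2)/2)"
      proof -
        have "\<bar>s\<bar> * \<bar>t\<bar> \<le> (s\<^sup>2 + t\<^sup>2)/2"
          using sum_squares_bound[of "\<bar>s\<bar>" "\<bar>t\<bar>"] by (simp add: power2_abs)
        then show ?thesis using e by (intro mult_left_mono) auto
      qed
      finally have a2: "\<bar>s\<bar> * (\<eta>2 * (M * \<bar>t\<bar>)) \<le> \<eta>/4 * (s\<^sup>2 + t\<^sup>2)" by simp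
      have "\<bar>s\<bar> * (C * t\<^sup>2 + \<eta>2 * (M * \<bar>t\<bar>)) = \<bar>s\<bar> * (C * t\<^sup>2) + \<bar>s\<bar> * (\<eta>2 * (M * \<bar>t\<bar>))"
        by (simp add: algebra_simps)
      then have "\<eta>1 * s\<^sup>2 + \<eta>1 * t\<^sup>2 + \<bar>s\<bar> * (C * t\<^sup>2 + \<eta>2 * (M * \<bar>t\<bar>)) + (s\<^sup>2/2) * (2 * \<eta>1)
          \<le> \<eta>/8 * s\<^sup>2 + \<eta>/8 * t\<^sup>2 + (\<eta>/8 * t\<^sup>2 + \<eta>/4 * (s\<^sup>2 + t\<^sup>2)) + (s\<^sup>2/2) * (2 * (\<eta>/8))"
        using a1 a2 unfolding \<eta>1_def by linarith
      also have "\<dots> = \<eta>/2 * (s\<^sup>2 + t\<^sup>2)" by (simp add: algebra_simps)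
      also have "\<dots> \<le> \<eta> * (s\<^sup>2 + t\<^sup>2)" using e by (intro mult_right_mono) auto
      finally show ?thesis .
    qed
    finally show ?thesis using ident by simp
  qed
  show ?thesis
    apply (rule exI[of _ r], rule conjI[OF r])
    apply (rule exI[of _ T], rule conjI[OF T])
    using main unfolding Ga_def Gb_def by blast
qed



lemma grid:
  fixes A B :: "real \<Rightarrow> pt \<Rightarrow> pt"
  assumes grpA: "\<And>x y p. A (x + y) p = A x (A y p)" and A0: "\<And>p. A 0 p = p"
    and bA: "\<forall>y\<in>cball c R. \<forall>\<sigma>. \<bar>\<sigma>\<bar> \<le> T \<longrightarrow> norm (A \<sigma> y - y) \<le> M * \<bar>\<sigma>\<bar>"
    and bB: "\<forall>y\<in>cball c R. \<forall>\<sigma>. \<bar>\<sigma>\<bar> \<le> T \<longrightarrow> norm (B \<sigma> y - y) \<le> M * \<bar>\<sigma>\<bar>"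
    and lA: "\<forall>a\<in>cball c R. \<forall>b\<in>cball c R. \<forall>\<sigma>. \<bar>\<sigma>\<bar> \<le> T \<longrightarrow> norm (A \<sigma> a - A \<sigma> b) \<le> K * norm (a - b)"
    and K: "K \<ge> 0" and M: "M \<ge> 0"
    and t: "\<bar>t\<bar> \<le> T" and rho: "\<rho> + 2 * M * T \<le> R"
    and D: "\<forall>y\<in>cball c \<rho>. norm (B t (A h y) - A h (B t y)) \<le> D"
  shows "\<bar>real k * h\<bar> \<le> T \<Longrightarrow> y \<in> cball c (\<rho> - M * real k * \<bar>h\<bar>) \<Longrightarrow>
     norm (B t (A (real k * h) y) - A (real k * h) (B t y)) \<le> real k * K * D"
proof (induction k arbitrary: y)
  case 0
  then show ?case using A0 by simp
next
  case (Suc k)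
  have hT: "\<bar>h\<bar> \<le> T"
  proof -
    have "\<bar>h\<bar> \<le> \<bar>real (Suc k) * h\<bar>" using mult_right_mono[of 1 "1 + real k" "\<bar>h\<bar>"] by (simp add: abs_mult)
    then show ?thesis using Suc.prems(1) by linarith
  qed
  have kT: "\<bar>real k * h\<bar> \<le> T"
  proof -
    have "\<bar>real k * h\<bar> \<le> \<bar>real (Suc k) * h\<bar>" by (simp add: abs_mult mult_right_mono)
    then show ?thesis using Suc.prems(1) by linarith
  qed
  have Mh: "M * \<bar>h\<bar> \<le> M * T" "M * \<bar>t\<bar> \<le> M * T" using hT t M by (auto intro: mult_left_mono)
  have yc: "dist c y \<le> \<rho> - M * real k * \<bar>h\<bar> - M * \<bar>h\<bar>" using Suc.prems(2) by (simp add: algebra_simps)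
  have "M * real k * \<bar>h\<bar> \<ge> 0" using M by simp
  then have yc2: "dist c y \<le> \<rho>" using yc M by (smt (verit) abs_ge_zero mult_nonneg_nonneg)
  have T0: "T \<ge> 0" using t by linarith
  have MT: "M * T \<ge> 0" using M T0 by simp
  have yR: "y \<in> cball c R" using yc2 rho MT by simp
  define y' where "y' = A h y"
  have "norm (y' - y) \<le> M * \<bar>h\<bar>" unfolding y'_def using bA yR hT by blast
  then have y'c: "dist c y' \<le> \<rho> - M * real k * \<bar>h\<bar>" using yc dist_triangle[of c y' y]
    by (simp add: dist_norm norm_minus_commute)
  have IH: "norm (B t (A (real k * h) y') - A (real k * h) (B t y')) \<le> real k * K * D"
    using Suc.IH[OF kT] y'c by simp
  define a where "a = B t (A h y)"
  define b where "b = A h (B t y)"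
  have y'R: "y' \<in> cball c R" using y'c rho MT \<open>M * real k * \<bar>h\<bar> \<ge> 0\<close> by simp
  have "norm (a - y') \<le> M * \<bar>t\<bar>" unfolding a_def y'_def[symmetric] using bB y'R t by blast
  then have "dist c a \<le> R" using y'c dist_triangle[of c a y'] Mh rho MT \<open>M * real k * \<bar>h\<bar> \<ge> 0\<close>
    by (simp add: dist_norm norm_minus_commute)
  then have aR: "a \<in> cball c R" by simp
  have "norm (B t y - y) \<le> M * \<bar>t\<bar>" using bB yR t by blast
  then have ty: "dist c (B t y) \<le> \<rho> + M * T" using yc2 dist_triangle[of c "B t y" y] Mh
    by (simp add: dist_norm norm_minus_commute)
  then have tyR: "B t y \<in> cball c R" using rho MT by simp
  have "norm (b - B t y) \<le> M * \<bar>h\<bar>" unfolding b_def using bA tyR hT by blast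
  then have "dist c b \<le> R" using ty dist_triangle[of c b "B t y"] Mh rho MT
    by (simp add: dist_norm norm_minus_commute)
  then have bR: "b \<in> cball c R" by simp
  have L2: "norm (A (real k * h) a - A (real k * h) b) \<le> K * norm (a - b)" using lA aR bR kT by blast
  have Dy: "norm (a - b) \<le> D" unfolding a_def b_def using D yc2 by simp
  have eq1: "A (real (Suc k) * h) y = A (real k * h) y'" unfolding y'_def
    using grpA[of "real k * h" h y] by (simp add: algebra_simps)
  have eq2: "A (real (Suc k) * h) (B t y) = A (real k * h) b" unfolding b_def
    using grpA[of "real k * h" h "B t y"] by (simp add: algebra_simps)
  have "B t (A (real (Suc k) * h) y) - A (real (Suc k) * h) (B t y)
      = (B t (A (real k * h) y') - A (real k * h) (B t y')) + (A (real k * h) a - A (real k * h) b)"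
    unfolding eq1 eq2 a_def y'_def by simp
  then have "norm (B t (A (real (Suc k) * h) y) - A (real (Suc k) * h) (B t y))
      \<le> norm (B t (A (real k * h) y') - A (real k * h) (B t y')) + norm (A (real k * h) a - A (real k * h) b)"
    by (simp add: norm_triangle_ineq)
  also have "\<dots> \<le> real k * K * D + K * D" using IH L2 Dy K by (smt (verit) mult_left_mono)
  also have "\<dots> = real (Suc k) * K * D" by (simp add: algebra_simps)
  finally show ?case .
qed



lemma uniformize:
  fixes P :: "real \<Rightarrow> pt \<Rightarrow> bool"
  assumes S: "compact S" and loc: "\<forall>p\<in>S. \<exists>r>0. \<exists>T>0. \<forall>y\<in>cball p r. P T y"
    and mono: "\<And>T T' y. P T y \<Longrightarrow> 0 < T' \<Longrightarrow> T' \<le> T \<Longrightarrow> P T' y"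
  shows "\<exists>T>0. \<forall>y\<in>S. P T y"
proof -
  have "\<forall>p\<in>S. \<exists>q. fst q > 0 \<and> snd q > 0 \<and> (\<forall>y\<in>cball p (fst q). P (snd q) y)"
  proof
    fix p assume "p \<in> S"
    then obtain r T where "r > 0" "T > 0" "\<forall>y\<in>cball p r. P T y" using loc by blast
    then show "\<exists>q. fst q > 0 \<and> snd q > 0 \<and> (\<forall>y\<in>cball p (fst q). P (snd q) y)"
      by (intro exI[of _ "(r, T)"]) simp
  qed
  then obtain g where g: "\<forall>p\<in>S. fst (g p) > 0 \<and> snd (g p) > 0 \<and> (\<forall>y\<in>cball p (fst (g p)). P (snd (g p)) y)"
    by (metis bchoice)
  have cov: "S \<subseteq> (\<Union>p\<in>S. ball p (fst (g p)))" using g by force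
  obtain D where D: "D \<subseteq> S" "finite D" "S \<subseteq> (\<Union>p\<in>D. ball p (fst (g p)))"
    using compactE_image[OF S _ cov] by blast
  show ?thesis
  proof (cases "D = {}")
    case True
    then have "S = {}" using D by auto
    then show ?thesis by (intro exI[of _ 1]) auto
  next
    case False
    define T where "T = Min ((\<lambda>p. snd (g p)) ` D)"
    have Tpos: "T > 0" unfolding T_def using D False g by (subst Min_gr_iff) auto
    have "P T y" if y: "y \<in> S" for y
    proof -
      obtain p where p: "p \<in> D" "y \<in> ball p (fst (g p))" using D y by blast
      then have "P (snd (g p)) y" using g D by auto
      moreover have "T \<le> snd (g p)" unfolding T_def using D p by auto
      ultimately show ?thesis using mono Tpos by blast
    qed
    then show ?thesis using Tpos by blast
  qed
qed

lemma comm_est: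
  assumes flF: "isflow F V" and fV: "C1 V DV" and flE: "isflow E W" and fW: "C1 W DW" and e: "\<eta> > 0"
  shows "\<exists>r>0. \<exists>T>0. \<forall>y\<in>cball c r. \<forall>s t. \<bar>s\<bar> \<le> T \<and> \<bar>t\<bar> \<le> T \<longrightarrow>
    norm (E s (F t y) - F t (E s y) - (s * t) *\<^sub>R (DW y (V y) - DV y (W y))) \<le> \<eta> * (s\<^sup>2 + t\<^sup>2)"
proof -
  have e2: "\<eta>/2 > 0" using e by simp
  obtain r1 T1 where r1: "r1 > 0" "T1 > 0" and X1: "\<forall>y\<in>cball c r1. \<forall>s t. \<bar>s\<bar> \<le> T1 \<and> \<bar>t\<bar> \<le> T1 \<longrightarrow>
    norm (E s (F t y) - (y + t *\<^sub>R V y + (t\<^sup>2/2) *\<^sub>R DV y (V y) + s *\<^sub>R W y + (s * t) *\<^sub>R DW y (V y)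
       + (s\<^sup>2/2) *\<^sub>R DW y (W y))) \<le> \<eta>/2 * (s\<^sup>2 + t\<^sup>2)"
    using comp_exp[OF flF fV flE fW e2, of c] by blast
  obtain r2 T2 where r2: "r2 > 0" "T2 > 0" and X2: "\<forall>y\<in>cball c r2. \<forall>s t. \<bar>s\<bar> \<le> T2 \<and> \<bar>t\<bar> \<le> T2 \<longrightarrow>
    norm (F s (E t y) - (y + t *\<^sub>R W y + (t\<^sup>2/2) *\<^sub>R DW y (W y) + s *\<^sub>R V y + (s * t) *\<^sub>R DV y (W y)
       + (s\<^sup>2/2) *\<^sub>R DV y (V y))) \<le> \<eta>/2 * (s\<^sup>2 + t\<^sup>2)"
    using comp_exp[OF flE fW flF fV e2, of c] by blast
  have "norm (E s (F t y) - F t (E s y) - (s * t) *\<^sub>R (DW y (V y) - DV y (W y))) \<le> \<eta> * (s\<^sup>2 + t\<^sup>2)"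
    if y: "y \<in> cball c (min r1 r2)" and st: "\<bar>s\<bar> \<le> min T1 T2" "\<bar>t\<bar> \<le> min T1 T2" for y s t
  proof -
    define P1 where "P1 = y + t *\<^sub>R V y + (t\<^sup>2/2) *\<^sub>R DV y (V y) + s *\<^sub>R W y + (s * t) *\<^sub>R DW y (V y)
       + (s\<^sup>2/2) *\<^sub>R DW y (W y)"
    define P2 where "P2 = y + s *\<^sub>R W y + (s\<^sup>2/2) *\<^sub>R DW y (W y) + t *\<^sub>R V y + (t * s) *\<^sub>R DV y (W y)
       + (t\<^sup>2/2) *\<^sub>R DV y (V y)"
    have 1: "norm (E s (F t y) - P1) \<le> \<eta>/2 * (s\<^sup>2 + t\<^sup>2)" unfolding P1_def using X1 y st by simp
    have 2: "norm (F t (E s y) - P2) \<le> \<eta>/2 * (t\<^sup>2 + s\<^sup>2)" unfolding P2_def using X2 y st by simp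
    have eq: "E s (F t y) - F t (E s y) - (s * t) *\<^sub>R (DW y (V y) - DV y (W y)) = (E s (F t y) - P1) - (F t (E s y) - P2)"
      unfolding P1_def P2_def by (simp add: algebra_simps)
    have "norm (E s (F t y) - F t (E s y) - (s * t) *\<^sub>R (DW y (V y) - DV y (W y)))
        \<le> norm (E s (F t y) - P1) + norm (F t (E s y) - P2)" unfolding eq by (rule norm_triangle_ineq4)
    also have "\<dots> \<le> \<eta> * (s\<^sup>2 + t\<^sup>2)" using 1 2 by (simp add: algebra_simps)
    finally show ?thesis .
  qed
  moreover have "min r1 r2 > 0" "min T1 T2 > 0" using r1 r2 by auto
  ultimately show ?thesis by blast
qed

lemma comm_brk:
  assumes flF: "isflow F V" and fV: "C1 V DV" and flE: "isflow E W" and fW: "C1 W DW"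
    and com: "\<And>s t y. E s (F t y) = F t (E s y)"
  shows "DW c (V c) = DV c (W c)"
proof -
  have "norm (DW c (V c) - DV c (W c)) \<le> 0 + \<eta>" if e: "\<eta> > 0" for \<eta>
  proof -
    have e2: "\<eta>/2 > 0" using e by simp
    obtain r T where rT: "r > 0" "T > 0" and X: "\<forall>y\<in>cball c r. \<forall>s t. \<bar>s\<bar> \<le> T \<and> \<bar>t\<bar> \<le> T \<longrightarrow>
      norm (E s (F t y) - F t (E s y) - (s * t) *\<^sub>R (DW y (V y) - DV y (W y))) \<le> \<eta>/2 * (s\<^sup>2 + t\<^sup>2)"
      using comm_est[OF flF fV flE fW e2, of c] by blast
    have cc: "c \<in> cball c r" using rT by simp
    have "\<bar>T\<bar> \<le> T \<and> \<bar>T\<bar> \<le> T" using rT by simp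
    then have "norm (E T (F T c) - F T (E T c) - (T * T) *\<^sub>R (DW c (V c) - DV c (W c))) \<le> \<eta>/2 * (T\<^sup>2 + T\<^sup>2)"
      using bspec[OF X cc] by blast
    then have "norm ((T * T) *\<^sub>R (DW c (V c) - DV c (W c))) \<le> \<eta>/2 * (T\<^sup>2 + T\<^sup>2)"
      using com by (simp add: norm_minus_commute)
    then have "T\<^sup>2 * norm (DW c (V c) - DV c (W c)) \<le> T\<^sup>2 * \<eta>"
      by (simp add: power2_eq_square mult.commute)
    then show ?thesis using rT by (simp add: power2_eq_square)
  qed
  then have "norm (DW c (V c) - DV c (W c)) \<le> 0" by (rule field_le_epsilon)
  then show ?thesis by simp
qed



lemma local_commute:
  assumes flF: "isflow F V" and fV: "C1 V DV" and flE: "isflow E W" and fW: "C1 W DW"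
    and brk: "\<And>y. DW y (V y) = DV y (W y)"
  shows "\<exists>r>0. \<exists>T>0. \<forall>y\<in>cball c r. \<forall>s t. \<bar>s\<bar> \<le> T \<and> \<bar>t\<bar> \<le> T \<longrightarrow> E t (F s y) = F s (E t y)"
proof -
  obtain rF TF MF KF :: real where hF: "rF > 0" "TF > 0" "MF > 0" "KF \<ge> 1"
    and bF: "\<forall>y\<in>cball c rF. \<forall>\<sigma>. \<bar>\<sigma>\<bar> \<le> TF \<longrightarrow> norm (F \<sigma> y - y) \<le> MF * \<bar>\<sigma>\<bar>"
    and lF: "\<forall>a\<in>cball c rF. \<forall>b\<in>cball c rF. \<forall>\<sigma>. \<bar>\<sigma>\<bar> \<le> TF \<longrightarrow> norm (F \<sigma> a - F \<sigma> b) \<le> KF * norm (a - b)"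
    using flow_local[OF flF fV, of c] by blast
  obtain rE TE ME KE :: real where hE: "rE > 0" "TE > 0" "ME > 0" "KE \<ge> 1"
    and bE: "\<forall>y\<in>cball c rE. \<forall>\<sigma>. \<bar>\<sigma>\<bar> \<le> TE \<longrightarrow> norm (E \<sigma> y - y) \<le> ME * \<bar>\<sigma>\<bar>"
    and lE: "\<forall>a\<in>cball c rE. \<forall>b\<in>cball c rE. \<forall>\<sigma>. \<bar>\<sigma>\<bar> \<le> TE \<longrightarrow> norm (E \<sigma> a - E \<sigma> b) \<le> KE * norm (a - b)"
    using flow_local[OF flE fW, of c] by blast
  define R where "R = min rF rE"
  define M where "M = max MF ME"
  define K where "K = max KF KE"
  define T where "T = min (min TF TE) (R / (8 * M))"
  define \<rho> where "\<rho> = R / 2"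
  have R: "R > 0" using hF hE by (simp add: R_def)
  have M: "M > 0" using hF by (simp add: M_def)
  have K: "K \<ge> 1" using hF by (simp add: K_def)
  have T: "T > 0" using hF hE R M by (simp add: T_def)
  have "T \<le> R / (8 * M)" unfolding T_def by simp
  then have "M * T \<le> M * (R / (8 * M))" using M by (intro mult_left_mono) auto
  also have "\<dots> = R / 8" using M by simp
  finally have MT: "M * T \<le> R / 8" .
  have bA: "\<forall>y\<in>cball c R. \<forall>\<sigma>. \<bar>\<sigma>\<bar> \<le> T \<longrightarrow> norm (F \<sigma> y - y) \<le> M * \<bar>\<sigma>\<bar>"
  proof (intro ballI allI impI)
    fix y \<sigma> assume "y \<in> cball c R" "\<bar>\<sigma>\<bar> \<le> T"
    then have "norm (F \<sigma> y - y) \<le> MF * \<bar>\<sigma>\<bar>" using bF by (auto simp: R_def T_def)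
    also have "\<dots> \<le> M * \<bar>\<sigma>\<bar>" by (intro mult_right_mono) (auto simp: M_def)
    finally show "norm (F \<sigma> y - y) \<le> M * \<bar>\<sigma>\<bar>" .
  qed
  have bB: "\<forall>y\<in>cball c R. \<forall>\<sigma>. \<bar>\<sigma>\<bar> \<le> T \<longrightarrow> norm (E \<sigma> y - y) \<le> M * \<bar>\<sigma>\<bar>"
  proof (intro ballI allI impI)
    fix y \<sigma> assume "y \<in> cball c R" "\<bar>\<sigma>\<bar> \<le> T"
    then have "norm (E \<sigma> y - y) \<le> ME * \<bar>\<sigma>\<bar>" using bE by (auto simp: R_def T_def)
    also have "\<dots> \<le> M * \<bar>\<sigma>\<bar>" by (intro mult_right_mono) (auto simp: M_def)
    finally show "norm (E \<sigma> y - y) \<le> M * \<bar>\<sigma>\<bar>" .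
  qed
  have lA: "\<forall>a\<in>cball c R. \<forall>b\<in>cball c R. \<forall>\<sigma>. \<bar>\<sigma>\<bar> \<le> T \<longrightarrow> norm (F \<sigma> a - F \<sigma> b) \<le> K * norm (a - b)"
  proof (intro ballI allI impI)
    fix a b \<sigma> assume "a \<in> cball c R" "b \<in> cball c R" "\<bar>\<sigma>\<bar> \<le> T"
    then have "norm (F \<sigma> a - F \<sigma> b) \<le> KF * norm (a - b)" using lF by (auto simp: R_def T_def)
    also have "\<dots> \<le> K * norm (a - b)" by (intro mult_right_mono) (auto simp: K_def)
    finally show "norm (F \<sigma> a - F \<sigma> b) \<le> K * norm (a - b)" .
  qed
  have lB: "\<forall>a\<in>cball c R. \<forall>b\<in>cball c R. \<forall>\<sigma>. \<bar>\<sigma>\<bar> \<le> T \<longrightarrow> norm (E \<sigma> a - E \<sigma> b) \<le> K * norm (a - b)"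
  proof (intro ballI allI impI)
    fix a b \<sigma> assume "a \<in> cball c R" "b \<in> cball c R" "\<bar>\<sigma>\<bar> \<le> T"
    then have "norm (E \<sigma> a - E \<sigma> b) \<le> KE * norm (a - b)" using lE by (auto simp: R_def T_def)
    also have "\<dots> \<le> K * norm (a - b)" by (intro mult_right_mono) (auto simp: K_def)
    finally show "norm (E \<sigma> a - E \<sigma> b) \<le> K * norm (a - b)" .
  qed
  have unif: "\<exists>T'>0. \<forall>y\<in>cball c \<rho>. \<forall>s t. \<bar>s\<bar> \<le> T' \<and> \<bar>t\<bar> \<le> T' \<longrightarrow>
      norm (E s (F t y) - F t (E s y)) \<le> \<eta> * (s\<^sup>2 + t\<^sup>2)" if e: "\<eta> > 0" for \<eta>
  proof (rule uniformize)
    show "compact (cball c \<rho>)" by simp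
    show "\<forall>p\<in>cball c \<rho>. \<exists>r>0. \<exists>T>0. \<forall>y\<in>cball p r. \<forall>s t. \<bar>s\<bar> \<le> T \<and> \<bar>t\<bar> \<le> T \<longrightarrow>
      norm (E s (F t y) - F t (E s y)) \<le> \<eta> * (s\<^sup>2 + t\<^sup>2)"
    proof
      fix p
      obtain r T where "r > 0" "T > 0" and X: "\<forall>y\<in>cball p r. \<forall>s t. \<bar>s\<bar> \<le> T \<and> \<bar>t\<bar> \<le> T \<longrightarrow>
        norm (E s (F t y) - F t (E s y) - (s * t) *\<^sub>R (DW y (V y) - DV y (W y))) \<le> \<eta> * (s\<^sup>2 + t\<^sup>2)"
        using comm_est[OF flF fV flE fW e, of p] by blast
      moreover have "DW y (V y) - DV y (W y) = 0" for y using brk by simp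
      ultimately show "\<exists>r>0. \<exists>T>0. \<forall>y\<in>cball p r. \<forall>s t. \<bar>s\<bar> \<le> T \<and> \<bar>t\<bar> \<le> T \<longrightarrow>
        norm (E s (F t y) - F t (E s y)) \<le> \<eta> * (s\<^sup>2 + t\<^sup>2)" by auto
    qed
  qed auto
  have main: "norm (E t (F s y) - F s (E t y)) \<le> K\<^sup>2 * (s\<^sup>2 + t\<^sup>2) * \<eta>"
    if y: "y \<in> cball c (R/4)" and s: "\<bar>s\<bar> \<le> T" and t: "\<bar>t\<bar> \<le> T" and e: "\<eta> > 0" for y s t \<eta>
  proof -
    obtain T' where T': "T' > 0" and U: "\<forall>y\<in>cball c \<rho>. \<forall>s t. \<bar>s\<bar> \<le> T' \<and> \<bar>t\<bar> \<le> T' \<longrightarrow>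
      norm (E s (F t y) - F t (E s y)) \<le> \<eta> * (s\<^sup>2 + t\<^sup>2)" using unif[OF e] by blast
    obtain n :: nat where n: "(\<bar>s\<bar> + \<bar>t\<bar>) / T' < real n" using reals_Archimedean2 by blast
    define N where "N = Suc n"
    have N: "real N \<ge> 1" "real N > 0" by (auto simp: N_def)
    have Nb: "(\<bar>s\<bar> + \<bar>t\<bar>) / T' < real N" using n by (simp add: N_def)
    define h where "h = s / real N"
    define h' where "h' = t / real N"
    have hs: "real N * h = s" "real N * h' = t" using N by (auto simp: h_def h'_def)
    have "\<bar>s\<bar> + \<bar>t\<bar> < real N * T'" using Nb T' by (simp add: divide_less_eq mult.commute)
    then have "\<bar>h\<bar> \<le> T'" "\<bar>h'\<bar> \<le> T'" using N by (auto simp: h_def h'_def abs_divide divide_le_eq mult.commute)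
    then have hT': "\<bar>h\<bar> \<le> T'" "\<bar>h'\<bar> \<le> T'" by auto
    have "\<bar>h'\<bar> \<le> \<bar>t\<bar>" using N by (simp add: h'_def abs_divide divide_le_eq mult_le_cancel_right1
          mult.commute[of "\<bar>t\<bar>"] mult_left_mono)
    then have h'T: "\<bar>h'\<bar> \<le> T" using t by simp
    define D where "D = \<eta> * (h\<^sup>2 + h'\<^sup>2)"
    have D1: "\<forall>y\<in>cball c \<rho>. norm (E h' (F h y) - F h (E h' y)) \<le> D"
      using U hT' unfolding D_def by (simp add: add.commute)
    have K0: "K \<ge> 0" "M \<ge> 0" using K M by auto
    have MT2: "2 * M * T = 2 * (M * T)" by simp
    have rho1: "\<rho> + 2 * M * T \<le> R" using MT R MT2 unfolding \<rho>_def by linarith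
    have G1: "\<bar>real N * h\<bar> \<le> T \<Longrightarrow> z \<in> cball c (\<rho> - M * real N * \<bar>h\<bar>) \<Longrightarrow>
        norm (E h' (F (real N * h) z) - F (real N * h) (E h' z)) \<le> real N * K * D" for z
      using grid[where A=F and B=E and c=c and R=R and T=T and M=M and K=K and t=h' and \<rho>=\<rho> and h=h and D=D,
          OF isflow_group[OF flF] isflow_0[OF flF] bA bB lA K0 h'T rho1 D1] .
    have as: "\<bar>s\<bar> = real N * \<bar>h\<bar>" unfolding hs(1)[symmetric] by (simp add: abs_mult)
    have MNh: "M * real N * \<bar>h\<bar> = M * \<bar>s\<bar>" by (simp add: as mult.assoc)
    have Ms: "M * \<bar>s\<bar> \<le> M * T" "M * \<bar>t\<bar> \<le> M * T" using s t M by auto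
    have D2: "\<forall>z\<in>cball c (\<rho> - M * T). norm (F s (E h' z) - E h' (F s z)) \<le> real N * K * D"
    proof
      fix z assume "z \<in> cball c (\<rho> - M * T)"
      then have "dist c z \<le> \<rho> - M * T" by simp
      then have "z \<in> cball c (\<rho> - M * real N * \<bar>h\<bar>)" unfolding mem_cball MNh using Ms by linarith
      then have "norm (E h' (F s z) - F s (E h' z)) \<le> real N * K * D" using G1 hs s by simp
      then show "norm (F s (E h' z) - E h' (F s z)) \<le> real N * K * D" by (simp add: norm_minus_commute)
    qed
    have rho2: "(\<rho> - M * T) + 2 * M * T \<le> R" using MT R MT2 unfolding \<rho>_def by linarith
    have G2: "\<bar>real N * h'\<bar> \<le> T \<Longrightarrow> z \<in> cball c ((\<rho> - M * T) - M * real N * \<bar>h'\<bar>) \<Longrightarrow>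
        norm (F s (E (real N * h') z) - E (real N * h') (F s z)) \<le> real N * K * (real N * K * D)" for z
      using grid[where A=E and B=F and c=c and R=R and T=T and M=M and K=K and t=s and \<rho>="\<rho> - M * T" and h=h' and D="real N * K * D",
          OF isflow_group[OF flE] isflow_0[OF flE] bB bA lB K0 s rho2 D2] .
    have at: "\<bar>t\<bar> = real N * \<bar>h'\<bar>" unfolding hs(2)[symmetric] by (simp add: abs_mult)
    have MNh': "M * real N * \<bar>h'\<bar> = M * \<bar>t\<bar>" by (simp add: at mult.assoc)
    have "dist c y \<le> R/4" using y by simp
    then have "y \<in> cball c ((\<rho> - M * T) - M * real N * \<bar>h'\<bar>)" unfolding mem_cball MNh' using Ms MT unfolding \<rho>_def by linarith
    then have "norm (F s (E t y) - E t (F s y)) \<le> real N * K * (real N * K * D)" using G2 hs t by simp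
    also have "real N * K * (real N * K * D) = K\<^sup>2 * (s\<^sup>2 + t\<^sup>2) * \<eta>"
      unfolding D_def h_def h'_def using N by (simp add: field_simps power2_eq_square)
    finally show ?thesis by (simp add: norm_minus_commute)
  qed
  have "E t (F s y) = F s (E t y)" if y: "y \<in> cball c (R/4)" and s: "\<bar>s\<bar> \<le> T" and t: "\<bar>t\<bar> \<le> T" for y s t
  proof -
    define Q where "Q = K\<^sup>2 * (s\<^sup>2 + t\<^sup>2) + 1"
    have Q: "Q > 0" unfolding Q_def by (simp add: add_nonneg_pos)
    have "norm (E t (F s y) - F s (E t y)) \<le> 0 + e" if e: "e > 0" for e
    proof -
      have "norm (E t (F s y) - F s (E t y)) \<le> K\<^sup>2 * (s\<^sup>2 + t\<^sup>2) * (e / Q)"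
        using main[OF y s t, of "e / Q"] e Q by simp
      also have "\<dots> \<le> Q * (e / Q)" using e Q by (intro mult_right_mono) (auto simp: Q_def)
      also have "\<dots> = e" using Q by simp
      finally show ?thesis by simp
    qed
    then have "norm (E t (F s y) - F s (E t y)) \<le> 0" by (rule field_le_epsilon)
    then show ?thesis by simp
  qed
  moreover have "R/4 > 0" using R by simp
  ultimately show ?thesis using T by blast
qed



lemma pick:
  fixes \<gamma> :: "real \<Rightarrow> pt"
  assumes c: "continuous (at S) \<gamma>" and S: "S \<ge> 0" and r: "r > 0" and T0: "T0 > 0"
  shows "\<exists>\<sigma>'. 0 \<le> \<sigma>' \<and> \<sigma>' \<le> S \<and> S - T0/2 \<le> \<sigma>' \<and> (\<sigma>' < S \<or> \<sigma>' = 0) \<and> \<gamma> \<sigma>' \<in> ball (\<gamma> S) r"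
proof -
  obtain d where d: "d > 0" "\<forall>u. dist u S < d \<longrightarrow> dist (\<gamma> u) (\<gamma> S) < r"
    using c r unfolding continuous_at_eps_delta by blast
  define m where "m = min d T0"
  have m: "m > 0" "m \<le> d" "m \<le> T0" using d T0 by (auto simp: m_def)
  define \<sigma>' where "\<sigma>' = max 0 (S - m/2)"
  have "dist \<sigma>' S < d" using m S by (auto simp: \<sigma>'_def dist_real_def)
  then have "dist (\<gamma> \<sigma>') (\<gamma> S) < r" using d by blast
  then have "\<gamma> \<sigma>' \<in> ball (\<gamma> S) r" by (simp add: dist_commute)
  moreover have "0 \<le> \<sigma>'" "\<sigma>' \<le> S" "S - T0/2 \<le> \<sigma>'" "\<sigma>' < S \<or> \<sigma>' = 0"
    using m S by (auto simp: \<sigma>'_def)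
  ultimately show ?thesis by blast
qed

lemma lip_cont:
  fixes g :: "pt \<Rightarrow> pt"
  assumes L: "\<forall>a\<in>cball p r. \<forall>b\<in>cball p r. norm (g a - g b) \<le> K * norm (a - b)" and K: "K \<ge> 1"
    and z: "z \<in> ball p r"
  shows "continuous (at z) g"
  unfolding continuous_at_eps_delta
proof (intro allI impI)
  fix e :: real assume e: "e > 0"
  define d where "d = min (r - dist p z) (e / K)"
  have d: "d > 0" using z e K by (simp add: d_def)
  have "dist (g x) (g z) < e" if x: "dist x z < d" for x
  proof -
    have "dist p x \<le> dist p z + dist z x" by (rule dist_triangle)
    then have "x \<in> cball p r" using x by (simp add: d_def dist_commute)
    moreover have "z \<in> cball p r" using z by simp
    ultimately have "norm (g x - g z) \<le> K * norm (x - z)" using L by blast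
    also have "\<dots> < K * (e / K)" using x K by (intro mult_strict_left_mono) (auto simp: d_def dist_norm)
    also have "\<dots> = e" using K by simp
    finally show ?thesis by (simp add: dist_norm)
  qed
  then show "\<exists>d>0. \<forall>x. dist x z < d \<longrightarrow> dist (g x) (g z) < e" using d by blast
qed

lemma flow_cont_fwd:
  assumes fl: "isflow F V" and fV: "C1 V DV" and s: "\<sigma> \<ge> 0"
  shows "continuous (at y) (F \<sigma>)"
proof (rule continuation[where Q="\<lambda>\<sigma>. continuous (at y) (F \<sigma>)", OF _ s])
  fix S :: real assume S: "S \<ge> 0" and hyp: "\<forall>\<sigma>. 0 \<le> \<sigma> \<and> \<sigma> < S \<longrightarrow> continuous (at y) (F \<sigma>)"
  obtain r T0 M K :: real where hq: "r > 0" "T0 > 0" "M > 0" "K \<ge> 1"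
    and lq: "\<forall>a\<in>cball (F S y) r. \<forall>b\<in>cball (F S y) r. \<forall>\<sigma>. \<bar>\<sigma>\<bar> \<le> T0 \<longrightarrow> norm (F \<sigma> a - F \<sigma> b) \<le> K * norm (a - b)"
    using flow_local[OF fl fV, of "F S y"] by blast
  obtain \<sigma>' where \<sigma>': "0 \<le> \<sigma>'" "\<sigma>' \<le> S" "S - T0/2 \<le> \<sigma>'" "\<sigma>' < S \<or> \<sigma>' = 0" "F \<sigma>' y \<in> ball (F S y) r"
    using pick[OF isflow_cont[OF fl, of S y] S hq(1) hq(2)] by blast
  have c': "continuous (at y) (F \<sigma>')"
  proof (cases "\<sigma>' < S")
    case True then show ?thesis using hyp \<sigma>' by blast
  next
    case False
    then have "\<sigma>' = 0" using \<sigma>' by blast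
    moreover have "F 0 = (\<lambda>x. x)" using isflow_0[OF fl] by (simp add: fun_eq_iff)
    ultimately show ?thesis by simp
  qed
  have "continuous (at y) (F \<sigma>)" if "0 \<le> \<sigma>" "\<sigma> < S + T0/2" for \<sigma>
  proof (cases "\<sigma> < S")
    case True then show ?thesis using hyp that by blast
  next
    case False
    then have d: "\<bar>\<sigma> - \<sigma>'\<bar> \<le> T0" using \<sigma>' that by auto
    have L: "\<forall>a\<in>cball (F S y) r. \<forall>b\<in>cball (F S y) r. norm (F (\<sigma> - \<sigma>') a - F (\<sigma> - \<sigma>') b) \<le> K * norm (a - b)"
      using lq d by blast
    have c2: "continuous (at (F \<sigma>' y)) (F (\<sigma> - \<sigma>'))" by (rule lip_cont[OF L hq(4) \<sigma>'(5)])
    have "F \<sigma> = F (\<sigma> - \<sigma>') \<circ> F \<sigma>'"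
      using isflow_group[OF fl, of "\<sigma> - \<sigma>'" \<sigma>'] by (simp add: fun_eq_iff)
    moreover have "continuous (at y) (F (\<sigma> - \<sigma>') \<circ> F \<sigma>')" using c' c2 by (rule continuous_at_compose)
    ultimately show ?thesis by simp
  qed
  then show "\<exists>e>0. \<forall>\<sigma>. 0 \<le> \<sigma> \<and> \<sigma> < S + e \<longrightarrow> continuous (at y) (F \<sigma>)"
    using hq(2) by (intro exI[of _ "T0/2"]) auto
qed



lemma step1:
  assumes flF: "isflow F V" and fV: "C1 V DV" and flE: "isflow E W" and fW: "C1 W DW"
    and brk: "\<And>y. DW y (V y) = DV y (W y)" and s: "s0 \<ge> 0"
  shows "\<exists>\<delta>>0. \<exists>r>0. \<forall>y\<in>ball y0 r. \<forall>t. \<bar>t\<bar> < \<delta> \<longrightarrow> E t (F s0 y) = F s0 (E t y)"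
proof (rule continuation[where Q="\<lambda>\<sigma>. \<exists>\<delta>>0. \<exists>r>0. \<forall>y\<in>ball y0 r. \<forall>t. \<bar>t\<bar> < \<delta> \<longrightarrow> E t (F \<sigma> y) = F \<sigma> (E t y)", OF _ s])
  fix S :: real assume S: "S \<ge> 0"
    and hyp: "\<forall>\<sigma>. 0 \<le> \<sigma> \<and> \<sigma> < S \<longrightarrow> (\<exists>\<delta>>0. \<exists>r>0. \<forall>y\<in>ball y0 r. \<forall>t. \<bar>t\<bar> < \<delta> \<longrightarrow> E t (F \<sigma> y) = F \<sigma> (E t y))"
  define q where "q = F S y0"
  obtain rq Tq where rq: "rq > 0" "Tq > 0" and LC: "\<forall>y\<in>cball q rq. \<forall>s t. \<bar>s\<bar> \<le> Tq \<and> \<bar>t\<bar> \<le> Tq \<longrightarrow> E t (F s y) = F s (E t y)"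
    using local_commute[OF flF fV flE fW brk, of q] by blast
  obtain \<sigma>' where \<sigma>': "0 \<le> \<sigma>'" "\<sigma>' \<le> S" "S - Tq/2 \<le> \<sigma>'" "\<sigma>' < S \<or> \<sigma>' = 0" "F \<sigma>' y0 \<in> ball (F S y0) rq"
    using pick[OF isflow_cont[OF flF, of S y0] S rq(1) rq(2)] by blast
  have Q': "\<exists>\<delta>>0. \<exists>r>0. \<forall>y\<in>ball y0 r. \<forall>t. \<bar>t\<bar> < \<delta> \<longrightarrow> E t (F \<sigma>' y) = F \<sigma>' (E t y)"
  proof (cases "\<sigma>' < S")
    case True then show ?thesis using hyp \<sigma>' by blast
  next
    case False
    then have "\<sigma>' = 0" using \<sigma>' by blast
    then show ?thesis using isflow_0[OF flF] by (intro exI[of _ 1] conjI ballI allI impI) auto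
  qed
  then obtain \<delta>1 r1 where d1: "\<delta>1 > 0" "r1 > 0" and C1': "\<forall>y\<in>ball y0 r1. \<forall>t. \<bar>t\<bar> < \<delta>1 \<longrightarrow> E t (F \<sigma>' y) = F \<sigma>' (E t y)"
    by blast
  have "continuous (at y0) (F \<sigma>')" by (rule flow_cont_fwd[OF flF fV \<sigma>'(1)])
  moreover have "rq - dist q (F \<sigma>' y0) > 0" using \<sigma>'(5) by (simp add: q_def)
  ultimately obtain r2 where r2: "r2 > 0" "\<forall>y. dist y y0 < r2 \<longrightarrow> dist (F \<sigma>' y) (F \<sigma>' y0) < rq - dist q (F \<sigma>' y0)"
    unfolding continuous_at_eps_delta by blast
  have inq: "F \<sigma>' y \<in> cball q rq" if "y \<in> ball y0 r2" for y
  proof -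
    have "dist y y0 < r2" using that by (simp add: dist_commute)
    then have "dist (F \<sigma>' y) (F \<sigma>' y0) < rq - dist q (F \<sigma>' y0)" using r2 by blast
    moreover have "dist q (F \<sigma>' y) \<le> dist q (F \<sigma>' y0) + dist (F \<sigma>' y0) (F \<sigma>' y)" by (rule dist_triangle)
    ultimately show ?thesis by (simp add: dist_commute)
  qed
  have ext: "\<exists>\<delta>>0. \<exists>r>0. \<forall>y\<in>ball y0 r. \<forall>t. \<bar>t\<bar> < \<delta> \<longrightarrow> E t (F \<sigma> y) = F \<sigma> (E t y)"
    if "0 \<le> \<sigma>" "\<sigma> < S + Tq/2" for \<sigma>
  proof (cases "\<sigma> < S")
    case True then show ?thesis using hyp that by blast
  next
    case False
    then have d: "\<bar>\<sigma> - \<sigma>'\<bar> \<le> Tq" using \<sigma>' that by auto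
    have "E t (F \<sigma> y) = F \<sigma> (E t y)" if y: "y \<in> ball y0 (min r1 r2)" and t: "\<bar>t\<bar> < min \<delta>1 Tq" for y t
    proof -
      have Fs: "F \<sigma> z = F (\<sigma> - \<sigma>') (F \<sigma>' z)" for z using isflow_group[OF flF, of "\<sigma> - \<sigma>'" \<sigma>' z] by simp
      have "E t (F \<sigma> y) = E t (F (\<sigma> - \<sigma>') (F \<sigma>' y))" by (simp add: Fs)
      also have "\<dots> = F (\<sigma> - \<sigma>') (E t (F \<sigma>' y))" using LC inq[of y] y t d by auto
      also have "\<dots> = F (\<sigma> - \<sigma>') (F \<sigma>' (E t y))" using C1' y t by auto
      also have "\<dots> = F \<sigma> (E t y)" by (simp add: Fs)
      finally show ?thesis .
    qed
    moreover have "min \<delta>1 Tq > 0" "min r1 r2 > 0" using d1 rq r2 by auto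
    ultimately show ?thesis by blast
  qed
  then show "\<exists>e>0. \<forall>\<sigma>. 0 \<le> \<sigma> \<and> \<sigma> < S + e \<longrightarrow> (\<exists>\<delta>>0. \<exists>r>0. \<forall>y\<in>ball y0 r. \<forall>t. \<bar>t\<bar> < \<delta> \<longrightarrow> E t (F \<sigma> y) = F \<sigma> (E t y))"
    using rq(2) by (intro exI[of _ "Tq/2"]) auto
qed

lemma step2:
  assumes flF: "isflow F V" and fV: "C1 V DV" and flE: "isflow E W" and fW: "C1 W DW"
    and brk: "\<And>y. DW y (V y) = DV y (W y)" and s: "s \<ge> 0" and t: "t0 \<ge> 0"
  shows "E t0 (F s y) = F s (E t0 y)"
proof (rule continuation[where Q="\<lambda>\<tau>. E \<tau> (F s y) = F s (E \<tau> y)", OF _ t])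
  fix S :: real assume S: "S \<ge> 0" and hyp: "\<forall>\<tau>. 0 \<le> \<tau> \<and> \<tau> < S \<longrightarrow> E \<tau> (F s y) = F s (E \<tau> y)"
  define q where "q = E S y"
  obtain \<delta> r where dr: "\<delta> > 0" "r > 0" and S1: "\<forall>z\<in>ball q r. \<forall>t. \<bar>t\<bar> < \<delta> \<longrightarrow> E t (F s z) = F s (E t z)"
    using step1[OF flF fV flE fW brk s, of q] by blast
  obtain \<tau>' where \<tau>': "0 \<le> \<tau>'" "\<tau>' \<le> S" "S - \<delta>/2 \<le> \<tau>'" "\<tau>' < S \<or> \<tau>' = 0" "E \<tau>' y \<in> ball (E S y) r"
    using pick[OF isflow_cont[OF flE, of S y] S dr(2) dr(1)] by blast
  have Q': "E \<tau>' (F s y) = F s (E \<tau>' y)"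
  proof (cases "\<tau>' < S")
    case True then show ?thesis using hyp \<tau>' by blast
  next
    case False
    then have "\<tau>' = 0" using \<tau>' by blast
    then show ?thesis using isflow_0[OF flE] by simp
  qed
  have "E \<tau> (F s y) = F s (E \<tau> y)" if "0 \<le> \<tau>" "\<tau> < S + \<delta>/2" for \<tau>
  proof (cases "\<tau> < S")
    case True then show ?thesis using hyp that by blast
  next
    case False
    then have d: "\<bar>\<tau> - \<tau>'\<bar> < \<delta>" using \<tau>' that by auto
    have Es: "E \<tau> z = E (\<tau> - \<tau>') (E \<tau>' z)" for z using isflow_group[OF flE, of "\<tau> - \<tau>'" \<tau>' z] by simp
    have "E \<tau> (F s y) = E (\<tau> - \<tau>') (E \<tau>' (F s y))" by (simp add: Es)
    also have "\<dots> = E (\<tau> - \<tau>') (F s (E \<tau>' y))" using Q' by simp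
    also have "\<dots> = F s (E (\<tau> - \<tau>') (E \<tau>' y))" using S1 \<tau>'(5) d by (auto simp: q_def)
    also have "\<dots> = F s (E \<tau> y)" by (simp add: Es)
    finally show ?thesis .
  qed
  then show "\<exists>e>0. \<forall>\<tau>. 0 \<le> \<tau> \<and> \<tau> < S + e \<longrightarrow> E \<tau> (F s y) = F s (E \<tau> y)"
    using dr(1) by (intro exI[of _ "\<delta>/2"]) auto
qed

lemma global_commute:
  assumes flF: "isflow F V" and fV: "C1 V DV" and flE: "isflow E W" and fW: "C1 W DW"
    and brk: "\<And>y. DW y (V y) = DV y (W y)"
  shows "E t (F s y) = F s (E t y)"
proof -
  have P1: "E t (F s y) = F s (E t y)" if "t \<ge> 0" for s t y
  proof (cases "s \<ge> 0")
    case True then show ?thesis using step2[OF flF fV flE fW brk True that] by simp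
  next
    case False
    then have "- s \<ge> 0" by simp
    from step2[OF flF fV flE fW brk this that, of "F s y"]
    have "E t y = F (- s) (E t (F s y))" using isflow_inv[OF flF] by simp
    then have "F s (E t y) = F s (F (- s) (E t (F s y)))" by simp
    then show ?thesis using isflow_inv2[OF flF] by simp
  qed
  show ?thesis
  proof (cases "t \<ge> 0")
    case True then show ?thesis using P1 by simp
  next
    case False
    then have "- t \<ge> 0" by simp
    from P1[OF this, of s "E t y"]
    have "E (- t) (F s (E t y)) = F s y" using isflow_inv[OF flE] by simp
    then have "E t (E (- t) (F s (E t y))) = E t (F s y)" by simp
    then show ?thesis using isflow_inv2[OF flE] by simp
  qed
qed



lemma partial_deriv:
  assumes "f differentiable (at p)"
  shows "(f has_derivative (\<lambda>h. pdx f p * fst h + pdy f p * snd h)) (at p)"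
proof -
  obtain D where D: "(f has_derivative D) (at p)" using assms unfolding differentiable_def by blast
  have lin: "linear D" using D has_derivative_linear by blast
  have dx: "((\<lambda>t. f (t, snd p)) has_field_derivative D (1, 0)) (at (fst p))"
  proof -
    have "((\<lambda>t. (t, snd p)) has_derivative (\<lambda>h. (h, 0))) (at (fst p))"
      by (auto intro!: derivative_eq_intros)
    from has_derivative_compose[OF this, of f D] D
    have "((\<lambda>t. f (t, snd p)) has_derivative (\<lambda>h. D (h, 0))) (at (fst p))" by simp
    moreover have "(\<lambda>h. D (h, 0)) = (\<lambda>h. D (1, 0) * h)"
    proof
      fix h :: real
      have "D (h, 0) = D (h *\<^sub>R (1, 0))" by simp
      also have "\<dots> = h *\<^sub>R D (1, 0)" by (rule linear_scale[OF lin])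
      finally show "D (h, 0) = D (1, 0) * h" by (simp add: mult.commute)
    qed
    ultimately show ?thesis by (simp add: has_field_derivative_def)
  qed
  have dy: "((\<lambda>t. f (fst p, t)) has_field_derivative D (0, 1)) (at (snd p))"
  proof -
    have "((\<lambda>t. (fst p, t)) has_derivative (\<lambda>h. (0, h))) (at (snd p))"
      by (auto intro!: derivative_eq_intros)
    from has_derivative_compose[OF this, of f D] D
    have "((\<lambda>t. f (fst p, t)) has_derivative (\<lambda>h. D (0, h))) (at (snd p))" by simp
    moreover have "(\<lambda>h. D (0, h)) = (\<lambda>h. D (0, 1) * h)"
    proof
      fix h :: real
      have "D (0, h) = D (h *\<^sub>R (0, 1))" by simp
      also have "\<dots> = h *\<^sub>R D (0, 1)" by (rule linear_scale[OF lin])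
      finally show "D (0, h) = D (0, 1) * h" by (simp add: mult.commute)
    qed
    ultimately show ?thesis by (simp add: has_field_derivative_def)
  qed
  have px: "pdx f p = D (1, 0)" unfolding pdx_def using dx by (rule DERIV_imp_deriv)
  have py: "pdy f p = D (0, 1)" unfolding pdy_def using dy by (rule DERIV_imp_deriv)
  have "D = (\<lambda>h. pdx f p * fst h + pdy f p * snd h)"
  proof
    fix h :: pt
    have "h = fst h *\<^sub>R (1, 0) + snd h *\<^sub>R (0, 1)" by (simp add: prod_eq_iff)
    then have "D h = D (fst h *\<^sub>R (1, 0) + snd h *\<^sub>R (0, 1))" by simp
    also have "\<dots> = fst h * D (1, 0) + snd h * D (0, 1)"
      by (simp only: linear_add[OF lin] linear_scale[OF lin] real_scaleR_def)
    finally show "D h = pdx f p * fst h + pdy f p * snd h" by (simp add: px py mult.commute)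
  qed
  then show ?thesis using D by simp
qed

lemma smooth2_diff: "smooth2 f \<Longrightarrow> f differentiable (at p)"
  by (erule smooth2.cases) blast
lemma smooth2_pdx: "smooth2 f \<Longrightarrow> smooth2 (pdx f)"
  by (erule smooth2.cases) blast
lemma smooth2_pdy: "smooth2 f \<Longrightarrow> smooth2 (pdy f)"
  by (erule smooth2.cases) blast
lemma smooth2_cont: "smooth2 f \<Longrightarrow> continuous (at p) f"
  using smooth2_diff differentiable_imp_continuous_within by blast

definition vf :: "(pt \<Rightarrow> real) \<Rightarrow> (pt \<Rightarrow> real) \<Rightarrow> pt \<Rightarrow> pt" where
  "vf a b = (\<lambda>p. (a p, b p))"
definition dvf :: "(pt \<Rightarrow> real) \<Rightarrow> (pt \<Rightarrow> real) \<Rightarrow> pt \<Rightarrow> pt \<Rightarrow> pt" where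
  "dvf a b = (\<lambda>p h. (pdx a p * fst h + pdy a p * snd h, pdx b p * fst h + pdy b p * snd h))"

lemma abs_lin2: "\<bar>x1 * fst h + x2 * snd h\<bar> \<le> \<bar>x1\<bar> * norm h + \<bar>x2\<bar> * norm (h :: pt)"
proof -
  have f: "\<bar>fst h\<bar> \<le> norm h" "\<bar>snd h\<bar> \<le> norm h"
    using norm_fst_le[of "fst h" "snd h"] norm_snd_le[of "snd h" "fst h"] by auto
  have "\<bar>x1 * fst h + x2 * snd h\<bar> \<le> \<bar>x1\<bar> * \<bar>fst h\<bar> + \<bar>x2\<bar> * \<bar>snd h\<bar>"
    using abs_triangle_ineq[of "x1 * fst h" "x2 * snd h"] by (simp add: abs_mult)
  also have "\<dots> \<le> \<bar>x1\<bar> * norm h + \<bar>x2\<bar> * norm h" using f by (intro add_mono mult_left_mono) auto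
  finally show ?thesis .
qed

lemma norm_lin2: "norm ((x1 * fst h + x2 * snd h, x3 * fst h + x4 * snd h) :: pt)
   \<le> (\<bar>x1\<bar> + \<bar>x2\<bar> + \<bar>x3\<bar> + \<bar>x4\<bar>) * norm h"
proof -
  have n: "norm ((a, b) :: pt) \<le> \<bar>a\<bar> + \<bar>b\<bar>" for a b
    using norm_Pair_le[of a b] by simp
  show ?thesis using abs_lin2[of x1 h x2] abs_lin2[of x3 h x4] n[of "x1 * fst h + x2 * snd h" "x3 * fst h + x4 * snd h"]
    by (simp add: algebra_simps)
qed

lemma C1_vf:
  assumes a: "smooth2 a" and b: "smooth2 b"
  shows "C1 (vf a b) (dvf a b)"
  unfolding C1_def
proof (intro conjI allI impI)
  fix p
  show "(vf a b has_derivative dvf a b p) (at p)"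
    unfolding vf_def dvf_def
    using has_derivative_Pair[OF partial_deriv[OF smooth2_diff[OF a]] partial_deriv[OF smooth2_diff[OF b]]] .
next
  fix c :: pt and \<epsilon> :: real assume e: "\<epsilon> > 0"
  have e4: "\<epsilon>/4 > 0" using e by simp
  have cont: "\<exists>r>0. \<forall>x. dist x c < r \<longrightarrow> \<bar>g x - g c\<bar> < \<epsilon>/4" if "smooth2 g" for g
    using smooth2_cont[OF that, of c] e4 unfolding continuous_at_eps_delta dist_real_def by blast
  obtain r1 where r1: "r1 > 0" "\<forall>x. dist x c < r1 \<longrightarrow> \<bar>pdx a x - pdx a c\<bar> < \<epsilon>/4" using cont[OF smooth2_pdx[OF a]] by blast
  obtain r2 where r2: "r2 > 0" "\<forall>x. dist x c < r2 \<longrightarrow> \<bar>pdy a x - pdy a c\<bar> < \<epsilon>/4" using cont[OF smooth2_pdy[OF a]] by blast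
  obtain r3 where r3: "r3 > 0" "\<forall>x. dist x c < r3 \<longrightarrow> \<bar>pdx b x - pdx b c\<bar> < \<epsilon>/4" using cont[OF smooth2_pdx[OF b]] by blast
  obtain r4 where r4: "r4 > 0" "\<forall>x. dist x c < r4 \<longrightarrow> \<bar>pdy b x - pdy b c\<bar> < \<epsilon>/4" using cont[OF smooth2_pdy[OF b]] by blast
  define r where "r = min (min r1 r2) (min r3 r4)"
  have "norm (dvf a b x h - dvf a b c h) \<le> \<epsilon> * norm h" if x: "x \<in> ball c r" for x h
  proof -
    have d: "dist x c < r" using x by (simp add: dist_commute)
    have "dvf a b x h - dvf a b c h = ((pdx a x - pdx a c) * fst h + (pdy a x - pdy a c) * snd h,
            (pdx b x - pdx b c) * fst h + (pdy b x - pdy b c) * snd h)"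
      unfolding dvf_def by (simp add: algebra_simps)
    then have "norm (dvf a b x h - dvf a b c h) \<le> (\<bar>pdx a x - pdx a c\<bar> + \<bar>pdy a x - pdy a c\<bar> + \<bar>pdx b x - pdx b c\<bar> + \<bar>pdy b x - pdy b c\<bar>) * norm h"
      using norm_lin2 by simp
    also have "\<dots> \<le> \<epsilon> * norm h"
    proof (rule mult_right_mono)
      have "\<bar>pdx a x - pdx a c\<bar> < \<epsilon>/4" "\<bar>pdy a x - pdy a c\<bar> < \<epsilon>/4" "\<bar>pdx b x - pdx b c\<bar> < \<epsilon>/4" "\<bar>pdy b x - pdy b c\<bar> < \<epsilon>/4"
        using r1 r2 r3 r4 d by (auto simp: r_def)
      then show "\<bar>pdx a x - pdx a c\<bar> + \<bar>pdy a x - pdy a c\<bar> + \<bar>pdx b x - pdx b c\<bar> + \<bar>pdy b x - pdy b c\<bar> \<le> \<epsilon>" by linarith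
    qed simp
    finally show ?thesis .
  qed
  moreover have "r > 0" using r1 r2 r3 r4 by (simp add: r_def)
  ultimately show "\<exists>r>0. \<forall>x\<in>ball c r. \<forall>h. norm (dvf a b x h - dvf a b c h) \<le> \<epsilon> * norm h" by blast
qed

lemma flow_of_proj:
  assumes pf: "proj_flow \<phi>" and hv: "has_vfield \<phi> a b"
  shows "isflow (piter \<phi>) (vf a b)"
  unfolding isflow_def
proof (intro conjI allI)
  fix z w y
  show "piter \<phi> (z + w) y = piter \<phi> z (piter \<phi> w y)" using pf unfolding proj_flow_def by simp
next
  fix y show "piter \<phi> 0 y = y" by (simp add: piter_def)
next
  fix \<sigma> y
  define z where "z = piter \<phi> \<sigma> y"
  have d0: "((\<lambda>u. piter \<phi> u z) has_vector_derivative vf a b z) (at 0)"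
    using hv unfolding has_vfield_def vf_def by blast
  have "((\<lambda>u. u - \<sigma>) has_vector_derivative 1) (at \<sigma>)"
    by (auto intro!: derivative_eq_intros simp: has_vector_derivative_def)
  from vector_diff_chain_at[OF this, of "\<lambda>u. piter \<phi> u z"] d0
  have "((\<lambda>u. piter \<phi> (u - \<sigma>) z) has_vector_derivative vf a b z) (at \<sigma>)" by (simp add: o_def)
  moreover have "piter \<phi> (u - \<sigma>) z = piter \<phi> u y" for u
    using pf unfolding proj_flow_def z_def by (metis comp_apply diff_add_cancel)
  ultimately show "((\<lambda>u. piter \<phi> u y) has_vector_derivative vf a b (piter \<phi> \<sigma> y)) (at \<sigma>)"
    by (simp add: z_def)
qed



lemma piter_comp: "piter (\<phi> \<circ> \<psi>) z x = piter \<phi> z (piter \<psi> z x)"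
  by (simp add: piter_def)

lemma commute_iff: "commute \<phi> \<psi> \<longleftrightarrow> (\<forall>s t y. piter \<psi> s (piter \<phi> t y) = piter \<phi> t (piter \<psi> s y))"
  unfolding commute_def by (auto simp: fun_eq_iff)

lemma commute_imp_pf:
  assumes pfp: "proj_flow \<phi>" and pfq: "proj_flow \<psi>" and hvp: "has_vfield \<phi> a b" and hvq: "has_vfield \<psi> c d"
    and sa: "smooth2 a" "smooth2 b" and sc: "smooth2 c" "smooth2 d"
    and com: "commute \<phi> \<psi>"
  shows "proj_flow (\<phi> \<circ> \<psi>)"
proof -
  define F where "F = piter \<phi>"
  define E where "E = piter \<psi>"
  have flF: "isflow F (vf a b)" unfolding F_def by (rule flow_of_proj[OF pfp hvp])
  have flE: "isflow E (vf c d)" unfolding E_def by (rule flow_of_proj[OF pfq hvq])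
  have fV: "C1 (vf a b) (dvf a b)" by (rule C1_vf[OF sa])
  have fW: "C1 (vf c d) (dvf c d)" by (rule C1_vf[OF sc])
  have cm: "E s (F t y) = F t (E s y)" for s t y using com unfolding commute_iff E_def F_def by blast
  have tr: "piter (\<phi> \<circ> \<psi>) (z + w) = piter (\<phi> \<circ> \<psi>) z \<circ> piter (\<phi> \<circ> \<psi>) w" for z w
  proof
    fix y
    have "piter (\<phi> \<circ> \<psi>) (z + w) y = F z (F w (E z (E w y)))"
      unfolding piter_comp F_def[symmetric] E_def[symmetric] using isflow_group[OF flF] isflow_group[OF flE] by simp
    also have "\<dots> = F z (E z (F w (E w y)))" using cm by simp
    finally have A: "piter (\<phi> \<circ> \<psi>) (z + w) y = F z (E z (F w (E w y)))" .
    have "(piter (\<phi> \<circ> \<psi>) z \<circ> piter (\<phi> \<circ> \<psi>) w) y = F z (E z (F w (E w y)))"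
      by (simp only: o_apply piter_comp F_def E_def)
    then show "piter (\<phi> \<circ> \<psi>) (z + w) y = (piter (\<phi> \<circ> \<psi>) z \<circ> piter (\<phi> \<circ> \<psi>) w) y"
      using A by simp
  qed
  have lim: "((\<lambda>z. (1 / z) *\<^sub>R (\<phi> \<circ> \<psi>) (z *\<^sub>R x)) \<longlongrightarrow> x) (at 0)" for x
  proof -
    obtain rF TF MF KF :: real where hF: "rF > 0" "TF > 0" "MF > 0" "KF \<ge> 1"
      and bF: "\<forall>y\<in>cball x rF. \<forall>\<sigma>. \<bar>\<sigma>\<bar> \<le> TF \<longrightarrow> norm (F \<sigma> y - y) \<le> MF * \<bar>\<sigma>\<bar>"
      using flow_local[OF flF fV, of x] by blast
    obtain rE TE ME KE :: real where hE: "rE > 0" "TE > 0" "ME > 0" "KE \<ge> 1"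
      and bE: "\<forall>y\<in>cball x rE. \<forall>\<sigma>. \<bar>\<sigma>\<bar> \<le> TE \<longrightarrow> norm (E \<sigma> y - y) \<le> ME * \<bar>\<sigma>\<bar>"
      using flow_local[OF flE fW, of x] by blast
    define Tm where "Tm = min TF (min TE (rF / ME))"
    have Tm: "Tm > 0" using hF hE by (simp add: Tm_def)
    have bnd: "norm ((1 / z) *\<^sub>R (\<phi> \<circ> \<psi>) (z *\<^sub>R x) - x) \<le> (MF + ME) * \<bar>z\<bar>"
      if z: "z \<noteq> 0" "\<bar>z\<bar> < Tm" for z
    proof -
      have eq: "(1 / z) *\<^sub>R (\<phi> \<circ> \<psi>) (z *\<^sub>R x) = F z (E z x)"
        using piter_comp[of \<phi> \<psi> z x] z unfolding F_def E_def by (simp add: piter_def)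
      have xE: "x \<in> cball x rE" using hE by simp
      have 1: "norm (E z x - x) \<le> ME * \<bar>z\<bar>" using bE xE z by (auto simp: Tm_def)
      have "ME * \<bar>z\<bar> \<le> ME * (rF / ME)" using z hE by (intro mult_left_mono) (auto simp: Tm_def)
      then have "ME * \<bar>z\<bar> \<le> rF" using hE by simp
      then have "E z x \<in> cball x rF" using 1 by (simp add: dist_norm norm_minus_commute)
      then have 2: "norm (F z (E z x) - E z x) \<le> MF * \<bar>z\<bar>" using bF z by (auto simp: Tm_def)
      have "norm (F z (E z x) - x) \<le> norm (F z (E z x) - E z x) + norm (E z x - x)"
        using norm_triangle_ineq[of "F z (E z x) - E z x" "E z x - x"] by simp
      then show ?thesis using 1 2 eq by (simp add: algebra_simps)
    qed
    have ev: "eventually (\<lambda>z. norm ((1 / z) *\<^sub>R (\<phi> \<circ> \<psi>) (z *\<^sub>R x) - x) \<le> (MF + ME) * \<bar>z\<bar>) (at 0)"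
      unfolding eventually_at using Tm bnd by (intro exI[of _ Tm]) (auto simp: dist_real_def)
    have g: "((\<lambda>z. (MF + ME) * \<bar>z\<bar>) \<longlongrightarrow> 0) (at (0::real))"
    proof -
      have "((\<lambda>z. (MF + ME) * \<bar>z\<bar>) \<longlongrightarrow> (MF + ME) * \<bar>0::real\<bar>) (at 0)"
        by (intro tendsto_intros)
      then show ?thesis by simp
    qed
    have "((\<lambda>z. (1 / z) *\<^sub>R (\<phi> \<circ> \<psi>) (z *\<^sub>R x) - x) \<longlongrightarrow> 0) (at 0)"
      by (rule Lim_null_comparison[OF ev g])
    then show ?thesis by (simp add: LIM_zero_iff)
  qed
  show ?thesis unfolding proj_flow_def using tr lim by blast
qed

lemma pf_imp_commute:
  assumes pfp: "proj_flow \<phi>" and pfq: "proj_flow \<psi>" and pf: "proj_flow (\<phi> \<circ> \<psi>)"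
  shows "commute \<phi> \<psi>"
proof -
  define F where "F = piter \<phi>"
  define E where "E = piter \<psi>"
  have gF: "F (z + w) y = F z (F w y)" for z w y using pfp unfolding proj_flow_def F_def by simp
  have gE: "E (z + w) y = E z (E w y)" for z w y using pfq unfolding proj_flow_def E_def by simp
  have F0: "F 0 y = y" for y by (simp add: F_def piter_def)
  have E0: "E 0 y = y" for y by (simp add: E_def piter_def)
  have gC: "F (z + w) (E (z + w) y) = F z (E z (F w (E w y)))" for z w y
  proof -
    have "piter (\<phi> \<circ> \<psi>) (z + w) y = (piter (\<phi> \<circ> \<psi>) z \<circ> piter (\<phi> \<circ> \<psi>) w) y"
      using pf unfolding proj_flow_def by simp
    then show ?thesis by (simp only: o_apply piter_comp F_def E_def)
  qed
  have "E z (F w y) = F w (E z y)" for z w y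
  proof -
    define y' where "y' = E (- w) y"
    have "F z (F w (E z (E w y'))) = F z (E z (F w (E w y')))"
      using gC[of z w y'] by (simp only: gF gE)
    then have "F (- z) (F z (F w (E z (E w y')))) = F (- z) (F z (E z (F w (E w y'))))" by simp
    then have "F w (E z (E w y')) = E z (F w (E w y'))"
      using gF[of "- z" z] F0 by simp
    moreover have "E w y' = y" unfolding y'_def using gE[of w "- w" y] E0 by simp
    ultimately show ?thesis by simp
  qed
  then show ?thesis unfolding commute_iff F_def E_def by blast
qed



theorem proposition5:
  fixes \<phi> \<psi> :: "pt \<Rightarrow> pt" and \<omega> \<rho> \<alpha> \<beta> :: "pt \<Rightarrow> real"
  assumes "proj_flow \<phi>" and "proj_flow \<psi>"
    and "has_vfield \<phi> \<omega> \<rho>" and "has_vfield \<psi> \<alpha> \<beta>"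
    and "smooth2 \<omega>" and "smooth2 \<rho>" and "smooth2 \<alpha>" and "smooth2 \<beta>"
  shows "(commute \<phi> \<psi> \<longleftrightarrow> proj_flow (\<phi> \<circ> \<psi>)) \<and>
         (commute \<phi> \<psi> \<longleftrightarrow>
           (\<forall>p. pdx \<omega> p * \<alpha> p + pdy \<omega> p * \<beta> p = \<omega> p * pdx \<alpha> p + \<rho> p * pdy \<alpha> p \<and>
                pdx \<rho> p * \<alpha> p + pdy \<rho> p * \<beta> p = \<omega> p * pdx \<beta> p + \<rho> p * pdy \<beta> p))"
proof -
  note pfp = assms(1) and pfq = assms(2) and hvp = assms(3) and hvq = assms(4)
  have flF: "isflow (piter \<phi>) (vf \<omega> \<rho>)" by (rule flow_of_proj[OF pfp hvp])
  have flE: "isflow (piter \<psi>) (vf \<alpha> \<beta>)" by (rule flow_of_proj[OF pfq hvq])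
  have fV: "C1 (vf \<omega> \<rho>) (dvf \<omega> \<rho>)" by (rule C1_vf[OF assms(5,6)])
  have fW: "C1 (vf \<alpha> \<beta>) (dvf \<alpha> \<beta>)" by (rule C1_vf[OF assms(7,8)])
  have brk_iff: "(dvf \<alpha> \<beta> p (vf \<omega> \<rho> p) = dvf \<omega> \<rho> p (vf \<alpha> \<beta> p)) \<longleftrightarrow>
      (pdx \<omega> p * \<alpha> p + pdy \<omega> p * \<beta> p = \<omega> p * pdx \<alpha> p + \<rho> p * pdy \<alpha> p \<and>
       pdx \<rho> p * \<alpha> p + pdy \<rho> p * \<beta> p = \<omega> p * pdx \<beta> p + \<rho> p * pdy \<beta> p)" for p
    unfolding dvf_def vf_def by (auto simp: prod_eq_iff mult.commute)
  have part1: "commute \<phi> \<psi> \<longleftrightarrow> proj_flow (\<phi> \<circ> \<psi>)"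
    using commute_imp_pf[OF pfp pfq hvp hvq assms(5,6) assms(7,8)] pf_imp_commute[OF pfp pfq] by blast
  have part2a: "\<forall>p. pdx \<omega> p * \<alpha> p + pdy \<omega> p * \<beta> p = \<omega> p * pdx \<alpha> p + \<rho> p * pdy \<alpha> p \<and>
                pdx \<rho> p * \<alpha> p + pdy \<rho> p * \<beta> p = \<omega> p * pdx \<beta> p + \<rho> p * pdy \<beta> p"
    if com: "commute \<phi> \<psi>"
  proof
    fix p
    have "piter \<psi> s (piter \<phi> t y) = piter \<phi> t (piter \<psi> s y)" for s t y
      using com unfolding commute_iff by blast
    then have "dvf \<alpha> \<beta> p (vf \<omega> \<rho> p) = dvf \<omega> \<rho> p (vf \<alpha> \<beta> p)"
      by (rule comm_brk[OF flF fV flE fW])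
    then show "pdx \<omega> p * \<alpha> p + pdy \<omega> p * \<beta> p = \<omega> p * pdx \<alpha> p + \<rho> p * pdy \<alpha> p \<and>
                pdx \<rho> p * \<alpha> p + pdy \<rho> p * \<beta> p = \<omega> p * pdx \<beta> p + \<rho> p * pdy \<beta> p"
      using brk_iff by blast
  qed
  have part2b: "commute \<phi> \<psi>"
    if eqs: "\<forall>p. pdx \<omega> p * \<alpha> p + pdy \<omega> p * \<beta> p = \<omega> p * pdx \<alpha> p + \<rho> p * pdy \<alpha> p \<and>
                pdx \<rho> p * \<alpha> p + pdy \<rho> p * \<beta> p = \<omega> p * pdx \<beta> p + \<rho> p * pdy \<beta> p"
  proof -
    have brk: "dvf \<alpha> \<beta> y (vf \<omega> \<rho> y) = dvf \<omega> \<rho> y (vf \<alpha> \<beta> y)" for y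
      using eqs brk_iff by blast
    have "piter \<psi> t (piter \<phi> s y) = piter \<phi> s (piter \<psi> t y)" for s t y
      by (rule global_commute[OF flF fV flE fW brk])
    then show ?thesis unfolding commute_iff by blast
  qed
  show ?thesis using part1 part2a part2b by blast
qed


end
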